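(* Let $d\ge3$ and let $\phi(x,t;y)=\langle x,y\rangle+\psi(t;y)$ be a translation-invariant phase on $\mathbb{B}^{d-1}_{\varepsilon_0}\times\mathbb{B}^1_{\varepsilon_0}\times\mathbb{B}^{d-1}_{\varepsilon_0}$ satisfying Hörmander's non-degeneracy conditions $(H_1),(H_2)$ and Bourgain's condition at every point. Then there exist an open neighborhood $U$ of the origin in $\mathbb{R}^d$, a diffeomorphism $\kappa:U\to\kappa(U)\subset\mathbb{B}^{d-1}_{\varepsilon_0}\times\mathbb{B}^1_{\varepsilon_0}$, and smooth functions $h,q$ of $y$ and $f$ of $t$, with $\nabla^2_y h(y)$ non-degenerate, such that $$\phi(\kappa(x,t);y)=\langle x,y\rangle+t\,h(y)+q(y)+f(t)$$ for all $(x,t)\in U$ and $y\in\mathbb{B}^{d-1}_{\varepsilon_0}$ (after shrinking $\varepsilon_0$ if necessary). Consequently, for every $y$ and every $\mathbf z\in U$, $\{\mathbf z'\in U:\nabla_y\phi(\kappa(\mathbf z');y)=\nabla_y\phi(\kappa(\mathbf z);y)\}=U\cap\{\mathbf z+s(-\nabla h(y),1):s\in\mathbb{R}\}$, i.e. $\kappa^{-1}$ maps the Kakeya curves of $\phi$ into straight lines with directions $(-\nabla h(y),1)$, and curved Kakeya sets associated with $\phi$ are mapped by $\kappa^{-1}$ to sets containing such line segments for an open set of directions.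
   Context: Coordinates: $\mathbf x=(x,t)\in\mathbb{B}^{d-1}_{\varepsilon_0}\times\mathbb{B}^1_{\varepsilon_0}$, $y\in\mathbb{B}^{d-1}_{\varepsilon_0}$, $\mathbb{B}^k_r$ the $k$-dimensional ball of radius $r$ centered at $0$, $\varepsilon_0>0$ small depending on $\phi$; $\phi$ is smooth. Hörmander's conditions: $(H_1)$ $\mathrm{rank}\,\nabla_{\mathbf x}\nabla_y\phi(\mathbf x;y)=d-1$ everywhere; $(H_2)$ with $G_0(\mathbf x;y)=\bigwedge_{j=1}^{d-1}\partial_{y_j}\nabla_{\mathbf x}\phi(\mathbf x;y)$ (identified with a vector of $\mathbb{R}^d$, normal to the $d-1$ vectors $\partial_{y_j}\nabla_{\mathbf x}\phi$), one has $\det\nabla^2_y\langle\nabla_{\mathbf x}\phi(\mathbf x;y),G_0(\mathbf x;y_0)\rangle|_{y=y_0}\ne0$ for all $(\mathbf x,y_0)$. Translation-invariant: $\phi(x,t;y)=\langle x,y\rangle+\psi(t;y)$ with $\psi$ smooth and $\psi(0;y)=0$. Bourgain's condition at $(\mathbf x_0;y_0)$: there is a scalar $C(\mathbf x_0;y_0)$ such that for all $1\le i,j\le d-1$, $(G_0\cdot\nabla_{\mathbf x})^2\partial^2_{y_iy_j}\phi(\mathbf x_0;y_0)=C(\mathbf x_0;y_0)(G_0\cdot\nabla_{\mathbf x})\partial^2_{y_iy_j}\phi(\mathbf x_0;y_0)$, where $G_0=G_0(\mathbf x;y_0)$ is regarded as a vector field in $\mathbf x$ and the derivatives are evaluated at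 $\mathbf x=\mathbf x_0$, $y=y_0$. Kakeya curves: $\Gamma^\phi_y(\mathbf x)=\{\mathbf x':\nabla_y\phi(\mathbf x';y)=\nabla_y\phi(\mathbf x;y)\}$. A curved Kakeya set associated with $\phi$ is a set $E$ such that for every $y\in\mathbb{B}^{d-1}_{\varepsilon_0}$ there is $\omega\in\mathbb{B}^{d-1}_{\varepsilon_0}$ with $\Gamma^\phi_y((\omega,0))\subset E$. *)

theory Defs
  imports "HOL-Analysis.Analysis"
begin

text \<open>Conventions. R^(d-1) is the type real^'n (so d - 1 = CARD('n));
  R^d is (real^'n) \<times> real, a point being \<open>(x,t)\<close>.\<close>

coinductive smooth_on :: "'a::real_normed_vector set \<Rightarrow> ('a \<Rightarrow> 'b::real_normed_vector) \<Rightarrow> bool" where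
  "\<lbrakk>open S; f differentiable_on S; \<And>v. smooth_on S (\<lambda>x. frechet_derivative f (at x) v)\<rbrakk>
     \<Longrightarrow> smooth_on S f"

definition diffeo_on :: "'a::real_normed_vector set \<Rightarrow> ('a \<Rightarrow> 'a) \<Rightarrow> bool" where
  "diffeo_on U \<kappa> \<longleftrightarrow> open U \<and> inj_on \<kappa> U \<and> open (\<kappa> ` U) \<and> smooth_on U \<kappa>
      \<and> smooth_on (\<kappa> ` U) (the_inv_into U \<kappa>)"

definition dd :: "('a::real_normed_vector \<Rightarrow> 'b::real_normed_vector) \<Rightarrow> 'a \<Rightarrow> 'a \<Rightarrow> 'b" where
  "dd f p v = vector_derivative (\<lambda>s. f (p + s *\<^sub>R v)) (at 0)"

definition grad :: "('a::euclidean_space \<Rightarrow> real) \<Rightarrow> 'a \<Rightarrow> 'a" where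
  "grad f p = (\<Sum>b\<in>Basis. dd f p b *\<^sub>R b)"

definition hess :: "(real^'n \<Rightarrow> real) \<Rightarrow> real^'n \<Rightarrow> real^'n^'n" where
  "hess f p = (\<chi> i j. dd (\<lambda>p'. dd f p' (axis j 1)) p (axis i 1))"

text \<open>Generalized cross product (wedge) of d-1 vectors in R^d = (real^'n) \<times> real,
  identified with the vector G such that \<open>G \<bullet> w = det [v_1,...,v_(d-1), w]\<close>
  (t-coordinate last): t-component is det of the x-parts; the x_i-component is
  minus the determinant of the x-part matrix with row i replaced by the t-row.\<close>
definition wedge :: "('n::finite \<Rightarrow> (real^'n) \<times> real) \<Rightarrow> (real^'n) \<times> real" where
  "wedge v = ((\<chi> i. - det (\<chi> i' j. if i' = i then snd (v j) else fst (v j) $ i')),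
              det (\<chi> i j. fst (v j) $ i))"

type_synonym 'n phase = "(real^'n) \<times> real \<Rightarrow> real^'n \<Rightarrow> real"

definition Gvec :: "'n::finite phase \<Rightarrow> (real^'n) \<times> real \<Rightarrow> real^'n \<Rightarrow> 'n \<Rightarrow> (real^'n) \<times> real" where
  "Gvec \<phi> X y j = dd (\<lambda>y'. grad (\<lambda>X'. \<phi> X' y') X) y (axis j 1)"

definition G0 :: "'n::finite phase \<Rightarrow> (real^'n) \<times> real \<Rightarrow> real^'n \<Rightarrow> (real^'n) \<times> real" where
  "G0 \<phi> X y = wedge (Gvec \<phi> X y)"

definition dom_x :: "real \<Rightarrow> ((real^'n) \<times> real) set" where
  "dom_x \<epsilon> = ball 0 \<epsilon> \<times> ball 0 \<epsilon>"

text \<open>(H1): rank of the mixed Hessian (whose columns are the Gvec) is d-1.\<close>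
definition H1 :: "'n::finite phase \<Rightarrow> real \<Rightarrow> bool" where
  "H1 \<phi> \<epsilon> \<longleftrightarrow> (\<forall>X\<in>dom_x \<epsilon>. \<forall>y\<in>ball 0 \<epsilon>. dim (span (range (Gvec \<phi> X y))) = CARD('n))"

definition H2 :: "'n::finite phase \<Rightarrow> real \<Rightarrow> bool" where
  "H2 \<phi> \<epsilon> \<longleftrightarrow> (\<forall>X\<in>dom_x \<epsilon>. \<forall>y0\<in>ball 0 \<epsilon>.
      det (hess (\<lambda>y. grad (\<lambda>X'. \<phi> X' y) X \<bullet> G0 \<phi> X y0) y0) \<noteq> 0)"

definition Gder :: "'n::finite phase \<Rightarrow> real^'n \<Rightarrow> ((real^'n) \<times> real \<Rightarrow> real) \<Rightarrow> (real^'n) \<times> real \<Rightarrow> real" where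
  "Gder \<phi> y0 u X = dd u X (G0 \<phi> X y0)"

definition bourgain_at :: "'n::finite phase \<Rightarrow> (real^'n) \<times> real \<Rightarrow> real^'n \<Rightarrow> bool" where
  "bourgain_at \<phi> X0 y0 \<longleftrightarrow> (\<exists>C. \<forall>i j.
     let u = (\<lambda>X. dd (\<lambda>y. dd (\<lambda>y'. \<phi> X y') y (axis j 1)) y0 (axis i 1))
     in Gder \<phi> y0 (Gder \<phi> y0 u) X0 = C * Gder \<phi> y0 u X0)"

definition ti_phase :: "(real \<Rightarrow> real^'n \<Rightarrow> real) \<Rightarrow> 'n phase" where
  "ti_phase \<psi> = (\<lambda>(x,t) y. x \<bullet> y + \<psi> t y)"

definition kcurve :: "'n::finite phase \<Rightarrow> real \<Rightarrow> real^'n \<Rightarrow> (real^'n) \<times> real \<Rightarrow> ((real^'n) \<times> real) set" where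
  "kcurve \<phi> \<epsilon> y X = {X'\<in>dom_x \<epsilon>. grad (\<phi> X') y = grad (\<phi> X) y}"

definition curved_kakeya :: "'n::finite phase \<Rightarrow> real \<Rightarrow> ((real^'n) \<times> real) set \<Rightarrow> bool" where
  "curved_kakeya \<phi> \<epsilon> E \<longleftrightarrow> (\<forall>y\<in>ball 0 \<epsilon>. \<exists>\<omega>\<in>ball 0 \<epsilon>. kcurve \<phi> \<epsilon> y (\<omega>, 0) \<subseteq> E)"

end

theory Submission
  imports Defs
begin

definition fd :: "('a::real_normed_vector \<Rightarrow> 'b::real_normed_vector) \<Rightarrow> 'a \<Rightarrow> 'a \<Rightarrow> 'b" where
  "fd f x v = frechet_derivative f (at x) v"

fun Ck :: "nat \<Rightarrow> 'a::real_normed_vector set \<Rightarrow> ('a \<Rightarrow> 'b::real_normed_vector) \<Rightarrow> bool" where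
  "Ck 0 S f = (open S \<and> continuous_on S f)"
| "Ck (Suc k) S f = (open S \<and> f differentiable_on S \<and> (\<forall>v. Ck k S (\<lambda>x. fd f x v)))"

lemma Ck_open: "Ck k S f \<Longrightarrow> open S"
  by (cases k) auto

lemma fd_works: "open S \<Longrightarrow> f differentiable_on S \<Longrightarrow> x \<in> S \<Longrightarrow> (f has_derivative fd f x) (at x)"
  unfolding fd_def[abs_def]
  using differentiable_on_eq_differentiable_at frechet_derivative_works by fastforce

lemma fd_eq: "(f has_derivative f') (at x) \<Longrightarrow> fd f x = f'"
  unfolding fd_def[abs_def] using frechet_derivative_at by metis

lemma Ck_mono: "Ck (Suc k) S f \<Longrightarrow> Ck k S f"
proof (induction k arbitrary: f)
  case 0
  then show ?case by (auto intro: differentiable_imp_continuous_on)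
next
  case (Suc k)
  then show ?case by (metis Ck.simps(2))
qed

lemma Ck_mono_le: "Ck k S f \<Longrightarrow> m \<le> k \<Longrightarrow> Ck m S f"
proof (induction k)
  case 0 thus ?case by simp
next
  case (Suc k) thus ?case by (metis Ck_mono le_Suc_eq)
qed

lemma fd_cong:
  assumes "open S" "x \<in> S" "\<And>z. z \<in> S \<Longrightarrow> f z = g z" "(f has_derivative f') (at x)"
  shows "(g has_derivative f') (at x)"
  using has_derivative_transform_within_open[OF assms(4) assms(1) assms(2)] assms(3) by metis

lemma Ck_cong: "Ck k S f \<Longrightarrow> (\<And>x. x \<in> S \<Longrightarrow> f x = g x) \<Longrightarrow> Ck k S g"
proof (induction k arbitrary: f g)
  case 0
  then show ?case using continuous_on_cong by force
next
  case (Suc k)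
  have S: "open S" "f differentiable_on S" and IHv: "\<And>v. Ck k S (\<lambda>x. fd f x v)" using Suc.prems by auto
  have dg: "(g has_derivative fd f x) (at x)" if "x \<in> S" for x
    using fd_cong[OF S(1) that Suc.prems(2) fd_works[OF S that]] by auto
  have "g differentiable_on S"
    using dg differentiable_at_imp_differentiable_on differentiable_def by blast
  moreover have "Ck k S (\<lambda>x. fd g x v)" for v
    by (rule Suc.IH[OF IHv[of v]]) (metis dg fd_eq)
  ultimately show ?case using S by simp
qed

lemma smooth_Ck: "smooth_on S f \<Longrightarrow> Ck k S f"
proof (induction k arbitrary: f)
  case 0
  then show ?case by (auto elim: smooth_on.cases intro: differentiable_imp_continuous_on)
next
  case (Suc k)
  from Suc.prems show ?case
    by (cases rule: smooth_on.cases) (auto simp: fd_def Suc.IH)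
qed

lemma Ck_smooth: "(\<forall>k. Ck k S f) \<Longrightarrow> smooth_on S f"
proof (coinduction arbitrary: f)
  case smooth_on
  have "Ck (Suc 0) S f" using smooth_on by blast
  then have "open S" "f differentiable_on S" by auto
  moreover have "\<forall>k. Ck k S (\<lambda>x. frechet_derivative f (at x) v)" for v
  proof
    fix k show "Ck k S (\<lambda>x. frechet_derivative f (at x) v)"
      using smooth_on[rule_format, of "Suc k"] by (auto simp: fd_def)
  qed
  ultimately show ?case by blast
qed

lemma smooth_iff_Ck: "smooth_on S f \<longleftrightarrow> (\<forall>k. Ck k S f)"
  using smooth_Ck Ck_smooth by blast

lemma Ck_SucI:
  assumes "open S" "\<And>x. x \<in> S \<Longrightarrow> (f has_derivative D x) (at x)"
    and "\<And>v. Ck k S (\<lambda>x. D x v)"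
  shows "Ck (Suc k) S f"
proof -
  have "f differentiable_on S"
    using assms(2) differentiable_at_imp_differentiable_on differentiable_def by blast
  moreover have "Ck k S (\<lambda>x. fd f x v)" for v
  proof -
    have "Ck k S (\<lambda>x. D x v)" by fact
    moreover have "\<forall>x\<in>S. D x v = fd f x v" using assms(2) fd_eq by metis
    ultimately show ?thesis using Ck_cong[of k S "\<lambda>x. D x v" "\<lambda>x. fd f x v"] by simp
  qed
  ultimately show ?thesis using assms(1) by simp
qed

lemma Ck_const: "open S \<Longrightarrow> Ck k S (\<lambda>x. c)"
proof (induction k arbitrary: c)
  case 0 then show ?case by simp
next
  case (Suc k)
  show ?case
    by (rule Ck_SucI[where D="\<lambda>x v. 0"]) (auto intro: Suc derivative_eq_intros)
qed

lemma Ck_add: "Ck k S f \<Longrightarrow> Ck k S g \<Longrightarrow> Ck k S (\<lambda>x. f x + g x)"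
proof (induction k arbitrary: f g)
  case 0 then show ?case by (auto intro: continuous_intros)
next
  case (Suc k)
  have S: "open S" "f differentiable_on S" "g differentiable_on S" using Suc.prems by auto
  show ?case
  proof (rule Ck_SucI[where D="\<lambda>x v. fd f x v + fd g x v"])
    show "open S" by fact
    show "((\<lambda>x. f x + g x) has_derivative (\<lambda>v. fd f x v + fd g x v)) (at x)" if "x \<in> S" for x
      using has_derivative_add[OF fd_works[OF S(1,2) that] fd_works[OF S(1,3) that]] .
    show "Ck k S (\<lambda>x. fd f x v + fd g x v)" for v
      using Suc.IH Suc.prems by auto
  qed
qed

lemma Ck_linear: "bounded_linear l \<Longrightarrow> Ck k S f \<Longrightarrow> Ck k S (\<lambda>x. l (f x))"
proof (induction k arbitrary: f)
  case 0 then show ?case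
    by (auto intro: continuous_on_compose2[OF linear_continuous_on[OF 0(1)]])
next
  case (Suc k)
  have S: "open S" "f differentiable_on S" using Suc.prems by auto
  show ?case
  proof (rule Ck_SucI[where D="\<lambda>x v. l (fd f x v)"])
    show "open S" by fact
    show "((\<lambda>x. l (f x)) has_derivative (\<lambda>v. l (fd f x v))) (at x)" if "x \<in> S" for x
      using bounded_linear.has_derivative[OF Suc.prems(1) fd_works[OF S that]] .
    show "Ck k S (\<lambda>x. l (fd f x v))" for v
      using Suc.IH Suc.prems by auto
  qed
qed

lemma Ck_scaleR: "Ck k S u \<Longrightarrow> Ck k S f \<Longrightarrow> Ck k S (\<lambda>x. u x *\<^sub>R f x)"
proof (induction k arbitrary: u f)
  case 0 then show ?case by (auto intro: continuous_intros)
next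
  case (Suc k)
  have S: "open S" "f differentiable_on S" "u differentiable_on S" using Suc.prems by auto
  show ?case
  proof (rule Ck_SucI[where D="\<lambda>x v. u x *\<^sub>R fd f x v + fd u x v *\<^sub>R f x"])
    show "open S" by fact
    show "((\<lambda>x. u x *\<^sub>R f x) has_derivative (\<lambda>v. u x *\<^sub>R fd f x v + fd u x v *\<^sub>R f x)) (at x)" if "x \<in> S" for x
      using has_derivative_scaleR[OF fd_works[OF S(1,3) that] fd_works[OF S(1,2) that]] .
    show "Ck k S (\<lambda>x. u x *\<^sub>R fd f x v + fd u x v *\<^sub>R f x)" for v
    proof (rule Ck_add)
      show "Ck k S (\<lambda>x. u x *\<^sub>R fd f x v)"
        using Suc.IH[OF Ck_mono[OF Suc.prems(1)]] Suc.prems(2) by auto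
      show "Ck k S (\<lambda>x. fd u x v *\<^sub>R f x)"
        using Suc.IH[OF _ Ck_mono[OF Suc.prems(2)]] Suc.prems(1) by auto
    qed
  qed
qed

lemma Ck_mult: "Ck k S u \<Longrightarrow> Ck k S w \<Longrightarrow> Ck k S (\<lambda>x. u x * w x :: real)"
  using Ck_scaleR[of k S u w] by simp

lemma Ck_sum: "finite I \<Longrightarrow> open S \<Longrightarrow> (\<And>i. i \<in> I \<Longrightarrow> Ck k S (f i)) \<Longrightarrow> Ck k S (\<lambda>x. \<Sum>i\<in>I. f i x)"
proof (induction I rule: finite_induct)
  case empty then show ?case by (simp add: Ck_const)
next
  case (insert i I) then show ?case by (simp add: Ck_add)
qed

lemma Ck_compose:
  fixes g :: "'b::euclidean_space \<Rightarrow> 'c::real_normed_vector" and f :: "'a::real_normed_vector \<Rightarrow> 'b"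
  shows "Ck k T g \<Longrightarrow> Ck k S f \<Longrightarrow> f ` S \<subseteq> T \<Longrightarrow> Ck k S (\<lambda>x. g (f x))"
proof (induction k arbitrary: f g)
  case 0 then show ?case by (auto intro: continuous_on_compose2)
next
  case (Suc k)
  have S: "open S" "f differentiable_on S" "open T" "g differentiable_on T" using Suc.prems by auto
  define D where "D x v = (\<Sum>b\<in>Basis. (fd f x v \<bullet> b) *\<^sub>R fd g (f x) b)" for x v
  show ?case
  proof (rule Ck_SucI[where D=D])
    show "open S" by fact
    show "((\<lambda>x. g (f x)) has_derivative D x) (at x)" if "x \<in> S" for x
    proof -
      have fx: "f x \<in> T" using that Suc.prems(3) by auto
      have "((\<lambda>x. g (f x)) has_derivative (\<lambda>v. fd g (f x) (fd f x v))) (at x)"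
        using diff_chain_at[OF fd_works[OF S(1,2) that] fd_works[OF S(3,4) fx]] by (simp add: o_def)
      moreover have "(\<lambda>v. fd g (f x) (fd f x v)) = D x"
      proof (rule ext)
        fix v
        have lin: "linear (fd g (f x))" using fd_works[OF S(3,4) fx] has_derivative_linear by blast
        have "fd g (f x) (fd f x v) = fd g (f x) (\<Sum>b\<in>Basis. (fd f x v \<bullet> b) *\<^sub>R b)"
          by (simp add: euclidean_representation)
        also have "\<dots> = D x v" unfolding D_def
          by (simp add: linear_sum[OF lin] linear_scale[OF lin])
        finally show "fd g (f x) (fd f x v) = D x v" .
      qed
      ultimately show ?thesis by simp
    qed
    show "Ck k S (\<lambda>x. D x v)" for v
      unfolding D_def
    proof (rule Ck_sum)
      fix b :: 'b assume "b \<in> Basis"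
      have "Ck k S (\<lambda>x. fd f x v \<bullet> b)"
        using Ck_linear[OF bounded_linear_inner_left, of k S "\<lambda>x. fd f x v" b] Suc.prems(2) by auto
      moreover have "Ck k S (\<lambda>x. fd g (f x) b)"
        using Suc.IH[of "\<lambda>y. fd g y b" f, OF _ Ck_mono[OF Suc.prems(2)] Suc.prems(3)] Suc.prems(1) by simp
      ultimately show "Ck k S (\<lambda>x. (fd f x v \<bullet> b) *\<^sub>R fd g (f x) b)" by (rule Ck_scaleR)
    qed (use S in auto)
  qed
qed

lemma Ck_inverse: "Ck k S u \<Longrightarrow> (\<And>x. x \<in> S \<Longrightarrow> u x \<noteq> 0) \<Longrightarrow> Ck k S (\<lambda>x. inverse (u x) :: real)"
proof (induction k arbitrary: u)
  case 0 then show ?case by (auto intro!: continuous_intros)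
next
  case (Suc k)
  have S: "open S" "u differentiable_on S" using Suc.prems by auto
  show ?case
  proof (rule Ck_SucI[where D="\<lambda>x v. - (inverse (u x) * fd u x v * inverse (u x))"])
    show "open S" by fact
    show "((\<lambda>x. inverse (u x)) has_derivative (\<lambda>v. - (inverse (u x) * fd u x v * inverse (u x)))) (at x)" if "x \<in> S" for x
      using Deriv.has_derivative_inverse[OF Suc.prems(2)[OF that] fd_works[OF S that]] .
    show "Ck k S (\<lambda>x. - (inverse (u x) * fd u x v * inverse (u x)))" for v
    proof -
      have i: "Ck k S (\<lambda>x. inverse (u x))" using Suc.IH[OF Ck_mono[OF Suc.prems(1)]] Suc.prems(2) by auto
      have "Ck k S (\<lambda>x. inverse (u x) * fd u x v * inverse (u x))"
        using Suc.prems(1) i by (auto intro!: Ck_mult)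
      then show ?thesis using Ck_linear[OF bounded_linear_minus[OF bounded_linear_ident]] by auto
    qed
  qed
qed

lemma Ck_subset: "Ck k S f \<Longrightarrow> open T \<Longrightarrow> T \<subseteq> S \<Longrightarrow> Ck k T f"
proof (induction k arbitrary: f)
  case 0 then show ?case by (auto intro: continuous_on_subset)
next
  case (Suc k) then show ?case by (auto intro: differentiable_on_subset)
qed

lemma Ck_inv_real:
  fixes A \<tau> :: "real \<Rightarrow> real"
  assumes I: "open I" and sA: "\<And>k. Ck k J A"
    and nz: "\<And>t. t \<in> J \<Longrightarrow> fd A t 1 \<noteq> 0"
    and inv: "\<And>s. s \<in> I \<Longrightarrow> \<tau> s \<in> J \<and> A (\<tau> s) = s"
    and cont: "continuous_on I \<tau>"
  shows "Ck k I \<tau>"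
proof (induction k)
  case 0 then show ?case using I cont by simp
next
  case (Suc k)
  have J: "open J" "A differentiable_on J" using sA[of 1] by auto
  show ?case
  proof (rule Ck_SucI[where D="\<lambda>s v. inverse (fd A (\<tau> s) 1) * v"])
    show "open I" by fact
    show "(\<tau> has_derivative (\<lambda>v. inverse (fd A (\<tau> s) 1) * v)) (at s)" if s: "s \<in> I" for s
    proof -
      have ts: "\<tau> s \<in> J" using inv s by auto
      have dA: "(A has_derivative fd A (\<tau> s)) (at (\<tau> s))" using fd_works[OF J ts] .
      have lin: "linear (fd A (\<tau> s))" using has_derivative_linear[OF dA] .
      define c where "c = fd A (\<tau> s) 1"
      have "fd A (\<tau> s) v = c * v" for v
        using linear_scale[OF lin, of v 1] by (simp add: c_def)
      then have "fd A (\<tau> s) = (\<lambda>v. c * v)" by (auto simp: fun_eq_iff)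
      then have dAr: "DERIV A (\<tau> s) :> fd A (\<tau> s) 1"
        using dA by (simp add: has_field_derivative_def c_def)
      obtain e where e: "e > 0" "ball s e \<subseteq> I" using I s open_contains_ball by blast
      have injA: "A (\<tau> y) = y" if "s - e < y" "y < s + e" for y
      proof -
        have "y \<in> ball s e" using that by (simp add: dist_real_def abs_if)
        then show ?thesis using e inv by auto
      qed
      have ct: "isCont \<tau> s" using continuous_on_eq_continuous_at[OF I] cont s by blast
      have "DERIV \<tau> s :> inverse (fd A (\<tau> s) 1)"
        by (rule DERIV_inverse_function[where a="s - e" and b="s + e", OF dAr nz[OF ts] _ _ injA ct]) (use e in auto)
      then show ?thesis by (simp add: has_field_derivative_def)
    qed
    show "Ck k I (\<lambda>s. inverse (fd A (\<tau> s) 1) * v)" for v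
    proof -
      have "Ck k J (\<lambda>t. fd A t 1)" using sA[of "Suc k"] by simp
      then have "Ck k I (\<lambda>s. fd A (\<tau> s) 1)"
        using Ck_compose[of k J "\<lambda>t. fd A t 1" I \<tau>] Suc.IH inv by auto
      then have "Ck k I (\<lambda>s. inverse (fd A (\<tau> s) 1))"
        by (rule Ck_inverse) (use nz inv in auto)
      then show ?thesis by (intro Ck_mult Ck_const I)
    qed
  qed
qed

lemma line_deriv:
  fixes f :: "'a::real_normed_vector \<Rightarrow> real"
  assumes S: "open S" "f differentiable_on S" and p: "p + \<sigma> *\<^sub>R v \<in> S"
  shows "DERIV (\<lambda>\<sigma>. f (p + \<sigma> *\<^sub>R v)) \<sigma> :> fd f (p + \<sigma> *\<^sub>R v) v"
proof -
  have d1: "((\<lambda>\<sigma>. p + \<sigma> *\<^sub>R v) has_derivative (\<lambda>h. h *\<^sub>R v)) (at \<sigma>)"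
    by (auto intro!: derivative_eq_intros)
  have "((\<lambda>\<sigma>. f (p + \<sigma> *\<^sub>R v)) has_derivative (\<lambda>h. fd f (p + \<sigma> *\<^sub>R v) (h *\<^sub>R v))) (at \<sigma>)"
    using diff_chain_at[OF d1 fd_works[OF S p]] by (simp add: o_def)
  moreover have "fd f (p + \<sigma> *\<^sub>R v) (h *\<^sub>R v) = fd f (p + \<sigma> *\<^sub>R v) v * h" for h
    using linear_scale[OF has_derivative_linear[OF fd_works[OF S p]]] by simp
  ultimately show ?thesis by (simp add: has_field_derivative_def)
qed

lemma MVT_2D:
  fixes f :: "'a::real_normed_vector \<Rightarrow> real"
  assumes C: "Ck 2 S f" and s: "s > 0"
    and sub: "\<And>a b. 0 \<le> a \<Longrightarrow> a \<le> s \<Longrightarrow> 0 \<le> b \<Longrightarrow> b \<le> s \<Longrightarrow> x + a *\<^sub>R v + b *\<^sub>R w \<in> S"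
  shows "\<exists>a b. 0 \<le> a \<and> a \<le> s \<and> 0 \<le> b \<and> b \<le> s \<and>
     f (x + s *\<^sub>R v + s *\<^sub>R w) - f (x + s *\<^sub>R v) - f (x + s *\<^sub>R w) + f x
       = s * s * fd (\<lambda>z. fd f z v) (x + a *\<^sub>R v + b *\<^sub>R w) w"
proof -
  have S: "open S" "f differentiable_on S" using C by (auto simp: numeral_2_eq_2)
  have S2: "(\<lambda>z. fd f z v) differentiable_on S" using C by (auto simp: numeral_2_eq_2)
  define g where "g \<sigma> = f (x + s *\<^sub>R w + \<sigma> *\<^sub>R v) - f (x + \<sigma> *\<^sub>R v)" for \<sigma>
  have "DERIV g \<sigma> :> fd f (x + s *\<^sub>R w + \<sigma> *\<^sub>R v) v - fd f (x + \<sigma> *\<^sub>R v) v"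
    if "0 \<le> \<sigma>" "\<sigma> \<le> s" for \<sigma>
  proof -
    have "x + s *\<^sub>R w + \<sigma> *\<^sub>R v \<in> S" using sub[of \<sigma> s] that s by (simp add: algebra_simps)
    moreover have "x + \<sigma> *\<^sub>R v \<in> S" using sub[of \<sigma> 0] that s by simp
    ultimately show ?thesis unfolding g_def
      by (intro DERIV_diff line_deriv[OF S]) auto
  qed
  from MVT2[OF s this] obtain a where a: "0 < a" "a < s"
    "g s - g 0 = (s - 0) * (fd f (x + s *\<^sub>R w + a *\<^sub>R v) v - fd f (x + a *\<^sub>R v) v)"
    by auto
  define k where "k \<rho> = fd f (x + a *\<^sub>R v + \<rho> *\<^sub>R w) v" for \<rho>
  have "DERIV k \<rho> :> fd (\<lambda>z. fd f z v) (x + a *\<^sub>R v + \<rho> *\<^sub>R w) w" if "0 \<le> \<rho>" "\<rho> \<le> s" for \<rho>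
    unfolding k_def using sub[of a \<rho>] that a
    by (intro line_deriv[OF S(1) S2, of "x + a *\<^sub>R v"]) auto
  from MVT2[OF s this] obtain b where b: "0 < b" "b < s"
    "k s - k 0 = (s - 0) * fd (\<lambda>z. fd f z v) (x + a *\<^sub>R v + b *\<^sub>R w) w"
    by auto
  have "f (x + s *\<^sub>R v + s *\<^sub>R w) - f (x + s *\<^sub>R v) - f (x + s *\<^sub>R w) + f x = g s - g 0"
    unfolding g_def by (simp add: algebra_simps)
  also have "\<dots> = s * (k s - k 0)" using a(3) unfolding k_def by (simp add: algebra_simps)
  also have "\<dots> = s * s * fd (\<lambda>z. fd f z v) (x + a *\<^sub>R v + b *\<^sub>R w) w" using b(3) by simp
  finally show ?thesis using a b by (intro exI[of _ a] exI[of _ b]) auto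
qed

lemma clairaut:
  fixes f :: "'a::real_normed_vector \<Rightarrow> real"
  assumes C: "Ck 2 S f" and x: "x \<in> S"
  shows "fd (\<lambda>z. fd f z v) x w = fd (\<lambda>z. fd f z w) x v"
proof (rule ccontr)
  define F where "F z = fd (\<lambda>z. fd f z v) z w" for z
  define G where "G z = fd (\<lambda>z. fd f z w) z v" for z
  assume ne: "fd (\<lambda>z. fd f z v) x w \<noteq> fd (\<lambda>z. fd f z w) x v"
  define \<gamma> where "\<gamma> = \<bar>F x - G x\<bar>"
  have g: "\<gamma> > 0" using ne by (simp add: \<gamma>_def F_def G_def)
  have S: "open S" using C Ck_open by blast
  have cF: "continuous_on S F" "continuous_on S G"
    using C by (auto simp: numeral_2_eq_2 F_def G_def)
  then have "isCont F x" "isCont G x" using continuous_on_eq_continuous_at[OF S] x by auto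
  then obtain d1 d2 where d: "d1 > 0" "\<forall>z. dist z x < d1 \<longrightarrow> dist (F z) (F x) < \<gamma>/2"
      "d2 > 0" "\<forall>z. dist z x < d2 \<longrightarrow> dist (G z) (G x) < \<gamma>/2"
    using g unfolding continuous_at_eps_delta by (metis half_gt_zero)
  obtain d0 where d0: "d0 > 0" "ball x d0 \<subseteq> S" using S x open_contains_ball by blast
  define \<delta> where "\<delta> = min d0 (min d1 d2)"
  have dl: "\<delta> > 0" using d d0 by (simp add: \<delta>_def)
  define s where "s = \<delta> / (2 * (norm v + norm w + 1))"
  have pos: "2 * (norm v + norm w + 1) > 0" by (smt (verit) norm_ge_zero)
  have s: "s > 0" unfolding s_def using dl pos by (rule divide_pos_pos)
  have small: "dist (x + a *\<^sub>R v + b *\<^sub>R w) x < \<delta>" if "0 \<le> a" "a \<le> s" "0 \<le> b" "b \<le> s" for a b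
  proof -
    have "dist (x + a *\<^sub>R v + b *\<^sub>R w) x = norm (a *\<^sub>R v + b *\<^sub>R w)" by (simp add: dist_norm)
    also have "\<dots> \<le> a * norm v + b * norm w" using that by (metis abs_of_nonneg norm_scaleR norm_triangle_le order_refl add_mono)
    also have "\<dots> \<le> s * norm v + s * norm w" using that by (intro add_mono mult_right_mono) auto
    also have "\<dots> < \<delta>"
    proof -
      have "s * norm v + s * norm w \<le> s * (norm v + norm w + 1)" using s by (simp add: algebra_simps)
      also have "\<dots> = \<delta> / 2" using pos by (simp add: s_def field_simps)
      finally show ?thesis using dl by linarith
    qed
    finally show ?thesis .
  qed
  have inS: "x + a *\<^sub>R v + b *\<^sub>R w \<in> S" if "0 \<le> a" "a \<le> s" "0 \<le> b" "b \<le> s" for a b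
    using small[OF that] d0 by (auto simp: \<delta>_def dist_commute)
  obtain a b where ab: "0 \<le> a" "a \<le> s" "0 \<le> b" "b \<le> s"
    "f (x + s *\<^sub>R v + s *\<^sub>R w) - f (x + s *\<^sub>R v) - f (x + s *\<^sub>R w) + f x = s * s * F (x + a *\<^sub>R v + b *\<^sub>R w)"
    using MVT_2D[OF C s, where v=v and w=w, OF inS] unfolding F_def by blast
  have inS': "x + a *\<^sub>R w + b *\<^sub>R v \<in> S" if "0 \<le> a" "a \<le> s" "0 \<le> b" "b \<le> s" for a b
    using inS[of b a] that by (simp add: algebra_simps)
  obtain a' b' where ab': "0 \<le> a'" "a' \<le> s" "0 \<le> b'" "b' \<le> s"
    "f (x + s *\<^sub>R w + s *\<^sub>R v) - f (x + s *\<^sub>R w) - f (x + s *\<^sub>R v) + f x = s * s * G (x + a' *\<^sub>R w + b' *\<^sub>R v)"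
    using MVT_2D[OF C s, where v=w and w=v, OF inS'] unfolding G_def by blast
  have "s * s * F (x + a *\<^sub>R v + b *\<^sub>R w) = s * s * G (x + a' *\<^sub>R w + b' *\<^sub>R v)"
    using ab(5) ab'(5) by (simp add: algebra_simps)
  then have eq: "F (x + a *\<^sub>R v + b *\<^sub>R w) = G (x + a' *\<^sub>R w + b' *\<^sub>R v)" using s by simp
  have "dist (F (x + a *\<^sub>R v + b *\<^sub>R w)) (F x) < \<gamma>/2"
    using d(2) small[OF ab(1-4)] by (auto simp: \<delta>_def)
  moreover have "dist (G (x + a' *\<^sub>R w + b' *\<^sub>R v)) (G x) < \<gamma>/2"
    using d(4) small[OF ab'(3,4,1,2)] by (auto simp: \<delta>_def algebra_simps)
  ultimately have "\<bar>F x - G x\<bar> < \<gamma>" using eq unfolding dist_real_def by linarith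
  then show False by (simp add: \<gamma>_def)
qed

lemma dd_has_derivative:
  assumes "(f has_derivative f') (at p)"
  shows "dd f p v = f' v"
proof -
  have d1: "((\<lambda>s. p + s *\<^sub>R v) has_derivative (\<lambda>h. h *\<^sub>R v)) (at 0)"
    by (auto intro!: derivative_eq_intros)
  have d2: "(f has_derivative f') (at ((\<lambda>s. p + s *\<^sub>R v) 0))" using assms by simp
  have "((\<lambda>s. f (p + s *\<^sub>R v)) has_derivative (\<lambda>h. f' (h *\<^sub>R v))) (at 0)"
    using diff_chain_at[OF d1 d2] by (simp add: o_def)
  moreover have "f' (h *\<^sub>R v) = h *\<^sub>R f' v" for h
    using linear_scale[OF has_derivative_linear[OF assms]] .
  ultimately have "((\<lambda>s. f (p + s *\<^sub>R v)) has_vector_derivative f' v) (at 0)"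
    by (simp add: has_vector_derivative_def)
  then show ?thesis unfolding dd_def by (rule vector_derivative_at)
qed

lemma dd_local:
  assumes "open S" "p \<in> S" "\<And>z. z \<in> S \<Longrightarrow> f z = g z" "(g has_derivative g') (at p)"
  shows "dd f p v = g' v"
proof -
  have "(f has_derivative g') (at p)"
    using fd_cong[OF assms(1,2) _ assms(4)] assms(3) by metis
  then show ?thesis by (rule dd_has_derivative)
qed

lemma fd_local:
  assumes "open S" "p \<in> S" "\<And>z. z \<in> S \<Longrightarrow> f z = g z" "(g has_derivative g') (at p)"
  shows "fd f p = g'"
proof -
  have "(f has_derivative g') (at p)"
    using fd_cong[OF assms(1,2) _ assms(4)] assms(3) by metis
  then show ?thesis by (rule fd_eq)
qed

lemma sum_Basis_prod:
  fixes c :: "('a::euclidean_space \<times> real) \<Rightarrow> real"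
  shows "(\<Sum>b\<in>Basis. c b *\<^sub>R b) = ((\<Sum>u\<in>Basis. c (u,0) *\<^sub>R u), c (0,1))"
proof -
  have "(\<Sum>b\<in>Basis. c b *\<^sub>R b) = (\<Sum>b\<in>(\<lambda>u. (u, 0::real)) ` Basis. c b *\<^sub>R b) + (\<Sum>b\<in>(\<lambda>v. (0::'a, v)) ` (Basis::real set). c b *\<^sub>R b)"
    unfolding Basis_prod_def by (rule sum.union_disjoint) auto
  also have "(\<Sum>b\<in>(\<lambda>u. (u, 0::real)) ` Basis. c b *\<^sub>R b) = (\<Sum>u\<in>Basis. c (u,0) *\<^sub>R (u, 0::real))"
    by (subst sum.reindex) (auto simp: inj_on_def)
  also have "\<dots> = ((\<Sum>u\<in>Basis. c (u,0) *\<^sub>R u), 0)"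
    by (simp add: prod_eq_iff fst_sum snd_sum)
  also have "(\<Sum>b\<in>(\<lambda>v. (0::'a, v)) ` (Basis::real set). c b *\<^sub>R b) = (0, c (0,1))"
    by simp
  finally show ?thesis by simp
qed

definition T :: "real \<times> (real^'n)" where "T = (1, 0)"
definition Y :: "'n::finite \<Rightarrow> real \<times> (real^'n)" where "Y i = (0, axis i 1)"
definition P :: "('a::real_normed_vector \<Rightarrow> 'b::real_normed_vector) \<Rightarrow> 'a \<Rightarrow> 'a \<Rightarrow> 'b" where
  "P f v = (\<lambda>z. fd f z v)"

lemma Ck_P: "Ck (Suc k) S f \<Longrightarrow> Ck k S (P f v)"
  by (simp add: P_def)

lemma P_apply: "P f v z = fd f z v" by (simp add: P_def)

lemma Ck_has_derivative: "Ck (Suc k) S f \<Longrightarrow> x \<in> S \<Longrightarrow> (f has_derivative fd f x) (at x)"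
  by (rule fd_works) auto

lemma restrict_y:
  fixes G :: "real \<times> 'a::real_normed_vector \<Rightarrow> 'b::real_normed_vector"
  assumes "Ck (Suc k) S G" "(t, y) \<in> S"
  shows "((\<lambda>y'. G (t, y')) has_derivative (\<lambda>h. fd G (t, y) (0, h))) (at y)"
proof -
  have d1: "((\<lambda>y'. (t, y')) has_derivative (\<lambda>h. (0, h))) (at y)"
    by (auto intro!: derivative_eq_intros)
  show ?thesis using diff_chain_at[OF d1 Ck_has_derivative[OF assms]] by (simp add: o_def)
qed

lemma restrict_t:
  fixes G :: "real \<times> 'a::real_normed_vector \<Rightarrow> 'b::real_normed_vector"
  assumes "Ck (Suc k) S G" "(t, y) \<in> S"
  shows "((\<lambda>t'. G (t', y)) has_derivative (\<lambda>h. fd G (t, y) (h, 0))) (at t)"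
proof -
  have d1: "((\<lambda>t'. (t', y)) has_derivative (\<lambda>h. (h, 0))) (at t)"
    by (auto intro!: derivative_eq_intros)
  show ?thesis using diff_chain_at[OF d1 Ck_has_derivative[OF assms]] by (simp add: o_def)
qed

lemma restrict_X:
  fixes G :: "real \<times> 'a::real_normed_vector \<Rightarrow> 'b::real_normed_vector"
  assumes "Ck (Suc k) S G" "(snd X, y) \<in> S"
  shows "((\<lambda>X'::'c::real_normed_vector \<times> real. G (snd X', y)) has_derivative (\<lambda>h. fd G (snd X, y) (snd h, 0))) (at X)"
proof -
  have d1: "((\<lambda>X'::'c \<times> real. (snd X', y)) has_derivative (\<lambda>h. (snd h, 0))) (at X)"
    by (auto intro!: derivative_eq_intros)
  show ?thesis using diff_chain_at[OF d1 Ck_has_derivative[OF assms]] by (simp add: o_def)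
qed

lemma Ck_all_P: "(\<And>k. Ck k S f) \<Longrightarrow> Ck k S (P f v)"
  using Ck_P by blast

locale ph =
  fixes \<psi> :: "real \<Rightarrow> real^'n::finite \<Rightarrow> real" and \<epsilon>0 :: real
  assumes eps: "\<epsilon>0 > 0" and sm: "smooth_on (ball 0 \<epsilon>0 \<times> ball 0 \<epsilon>0) (\<lambda>(t, y). \<psi> t y)"
begin

abbreviation "\<Psi> \<equiv> (\<lambda>(t, y). \<psi> t y)"
abbreviation "S0 \<equiv> ball (0::real) \<epsilon>0 \<times> ball (0::real^'n) \<epsilon>0"
abbreviation "\<phi> \<equiv> ti_phase \<psi>"

lemma Ck\<Psi>: "Ck k S0 \<Psi>" using smooth_Ck sm by blast

lemma inS0: "(t, y) \<in> S0 \<longleftrightarrow> \<bar>t\<bar> < \<epsilon>0 \<and> norm y < \<epsilon>0" by simp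

lemma phi_eq: "\<phi> X y = fst X \<bullet> y + \<psi> (snd X) y" by (simp add: ti_phase_def split_beta)

lemma dPsiX:
  assumes "\<bar>t\<bar> < \<epsilon>0" "norm y' < \<epsilon>0"
  shows "((\<lambda>X'::(real^'n) \<times> real. \<psi> (snd X') y') has_derivative (\<lambda>h. fd \<Psi> (t, y') (snd h, 0))) (at (x, t))"
  using restrict_X[OF Ck\<Psi>[of "Suc 0"], of "(x,t)" y'] assms by simp

lemma grad_phiX:
  assumes "\<bar>t\<bar> < \<epsilon>0" "norm y' < \<epsilon>0"
  shows "grad (\<lambda>X'. \<phi> X' y') (x, t) = (y', P \<Psi> T (t, y'))"
proof -
  have d: "((\<lambda>X'. \<phi> X' y') has_derivative (\<lambda>h. fst h \<bullet> y' + fd \<Psi> (t, y') (snd h, 0))) (at (x, t))"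
  proof -
    have d0: "((\<lambda>X'::(real^'n) \<times> real. fst X' \<bullet> y') has_derivative (\<lambda>h. fst h \<bullet> y')) (at (x, t))"
      by (auto intro!: derivative_eq_intros)
    show ?thesis unfolding phi_eq using has_derivative_add[OF d0 dPsiX[OF assms]] .
  qed
  have lin: "linear (fd \<Psi> (t, y'))"
    using Ck_has_derivative[OF Ck\<Psi>[of "Suc 0"], of "(t,y')"] assms has_derivative_linear by auto
  have "grad (\<lambda>X'. \<phi> X' y') (x, t) = (\<Sum>b\<in>Basis. (fst b \<bullet> y' + fd \<Psi> (t, y') (snd b, 0)) *\<^sub>R b)"
    unfolding grad_def using dd_has_derivative[OF d] by simp
  also have "\<dots> = (y', P \<Psi> T (t, y'))"
  proof -
    have "(\<Sum>u\<in>Basis. (u \<bullet> y') *\<^sub>R u) = y'"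
      using euclidean_representation[of y'] by (simp add: inner_commute)
    then show ?thesis
      unfolding sum_Basis_prod using linear_0[OF lin]
      by (simp add: P_def T_def zero_prod_def[symmetric])
  qed
  finally show ?thesis .
qed

lemma Gvec_eq:
  assumes "\<bar>snd X\<bar> < \<epsilon>0" "norm y0 < \<epsilon>0"
  shows "Gvec \<phi> X y0 j = (axis j 1, P (P \<Psi> T) (Y j) (snd X, y0))"
proof -
  obtain x t where X: "X = (x, t)" by fastforce
  have "Gvec \<phi> X y0 j = (\<lambda>h. (h, fd (P \<Psi> T) (t, y0) (0, h))) (axis j 1)"
    unfolding Gvec_def
  proof (rule dd_local[where S="ball 0 \<epsilon>0"])
    show "grad (\<lambda>X'. \<phi> X' z) X = (z, P \<Psi> T (t, z))" if "z \<in> ball 0 \<epsilon>0" for z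
      using grad_phiX[of t z x] that assms X by simp
    show "((\<lambda>z. (z, P \<Psi> T (t, z))) has_derivative (\<lambda>h. (h, fd (P \<Psi> T) (t, y0) (0, h)))) (at y0)"
      by (intro has_derivative_Pair has_derivative_ident restrict_y[OF Ck_all_P[OF Ck\<Psi>, of "Suc 0"]])
        (use assms X in auto)
  qed (use assms in auto)
  then show ?thesis by (simp add: P_def Y_def X)
qed

lemma G0_snd:
  assumes "\<bar>snd X\<bar> < \<epsilon>0" "norm y0 < \<epsilon>0"
  shows "snd (G0 \<phi> X y0) = 1"
proof -
  have "(\<chi> i j. fst (Gvec \<phi> X y0 j) $ i) = (mat 1 :: real^'n^'n)"
    using Gvec_eq[OF assms] by (simp add: vec_eq_iff mat_def axis_def)
  then show ?thesis by (simp add: G0_def wedge_def det_I)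
qed

lemma dPsi_y:
  assumes "\<bar>t\<bar> < \<epsilon>0" "norm y < \<epsilon>0"
  shows "((\<lambda>y'. \<psi> t y') has_derivative (\<lambda>h. fd \<Psi> (t, y) (0, h))) (at y)"
  using restrict_y[OF Ck\<Psi>[of "Suc 0"], of t y] assms by simp

lemma dG_y:
  fixes G :: "real \<times> (real^'n) \<Rightarrow> real"
  assumes "\<And>k. Ck k S0 G" "\<bar>t\<bar> < \<epsilon>0" "norm y < \<epsilon>0"
  shows "((\<lambda>y'. c + G (t, y')) has_derivative (\<lambda>h. fd G (t, y) (0, h))) (at y)"
proof -
  have "((\<lambda>y'. G (t, y')) has_derivative (\<lambda>h. fd G (t, y) (0, h))) (at y)"
    using restrict_y[OF assms(1)[of "Suc 0"], of t y] assms by simp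
  from has_derivative_add[OF has_derivative_const this] show ?thesis by simp
qed

lemma H2_trans:
  assumes h2: "H2 \<phi> \<epsilon>0" and t: "\<bar>t\<bar> < \<epsilon>0" and y0: "norm y0 < \<epsilon>0"
  shows "det (\<chi> i j. P (P (P \<Psi> T) (Y j)) (Y i) (t, y0)) \<noteq> 0"
proof -
  define G where "G = G0 \<phi> (0::real^'n, t) y0"
  have sG: "snd G = 1" using G0_snd[of "(0,t)" y0] t y0 by (simp add: G_def)
  define F where "F = (\<lambda>y. grad (\<lambda>X'. \<phi> X' y) (0::real^'n, t) \<bullet> G)"
  have Fe: "F y = y \<bullet> fst G + P \<Psi> T (t, y)" if "norm y < \<epsilon>0" for y
    using grad_phiX[OF t that, of 0] sG by (simp add: F_def inner_prod_def)
  have inner1: "dd F p (axis j 1) = axis j 1 \<bullet> fst G + P (P \<Psi> T) (Y j) (t, p)" if p: "norm p < \<epsilon>0" for p j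
  proof -
    have "dd F p (axis j 1) = (\<lambda>h. h \<bullet> fst G + fd (P \<Psi> T) (t, p) (0, h)) (axis j 1)"
    proof (rule dd_local[where S="ball 0 \<epsilon>0" and g="\<lambda>y. y \<bullet> fst G + P \<Psi> T (t, y)"])
      have d0: "((\<lambda>y. y \<bullet> fst G) has_derivative (\<lambda>h. h \<bullet> fst G)) (at p)"
        by (auto intro!: derivative_eq_intros)
      show "((\<lambda>y. y \<bullet> fst G + P \<Psi> T (t, y)) has_derivative (\<lambda>h. h \<bullet> fst G + fd (P \<Psi> T) (t, p) (0, h))) (at p)"
        using has_derivative_add[OF d0 restrict_y[OF Ck_all_P[OF Ck\<Psi>, of "Suc 0"], of t p]] t p by simp
    qed (use Fe p in auto)
    then show ?thesis by (simp add: P_def Y_def)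
  qed
  have "hess F y0 = (\<chi> i j. P (P (P \<Psi> T) (Y j)) (Y i) (t, y0))"
  proof -
    have "dd (\<lambda>p. dd F p (axis j 1)) y0 (axis i 1) = P (P (P \<Psi> T) (Y j)) (Y i) (t, y0)" for i j
    proof -
      have "dd (\<lambda>p. dd F p (axis j 1)) y0 (axis i 1) = (\<lambda>h. fd (P (P \<Psi> T) (Y j)) (t, y0) (0, h)) (axis i 1)"
        by (rule dd_local[where S="ball 0 \<epsilon>0" and g="\<lambda>p. axis j 1 \<bullet> fst G + P (P \<Psi> T) (Y j) (t, p)"])
           (use inner1 y0 t in \<open>auto intro!: dG_y Ck_all_P Ck\<Psi>\<close>)
      then show ?thesis by (simp add: P_def Y_def)
    qed
    then show ?thesis by (simp add: hess_def vec_eq_iff)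
  qed
  moreover have dom: "(0::real^'n, t) \<in> dom_x \<epsilon>0" using t eps by (simp add: dom_x_def)
  have "det (hess F y0) \<noteq> 0"
    using h2[unfolded H2_def, rule_format, OF dom, of y0] y0 by (simp add: F_def G_def)
  ultimately show ?thesis by simp
qed

lemma Gder_lem:
  assumes R: "\<And>k. Ck k S0 R" and w: "\<And>X. X \<in> dom_x \<epsilon>0 \<Longrightarrow> w X = R (snd X, y0)"
    and y0: "norm y0 < \<epsilon>0" and X: "X \<in> dom_x \<epsilon>0"
  shows "Gder \<phi> y0 w X = P R T (snd X, y0)"
proof -
  have sX: "\<bar>snd X\<bar> < \<epsilon>0" using X by (auto simp: dom_x_def mem_Times_iff)
  have "Gder \<phi> y0 w X = (\<lambda>h. fd R (snd X, y0) (snd h, 0)) (G0 \<phi> X y0)"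
    unfolding Gder_def
    by (rule dd_local[where S="dom_x \<epsilon>0" and g="\<lambda>X'. R (snd X', y0)"])
       (use w X sX y0 in \<open>auto simp: dom_x_def open_Times intro!: restrict_X[OF R[of "Suc 0"]]\<close>)
  then show ?thesis using G0_snd[OF sX y0] by (simp add: P_def T_def)
qed

abbreviation "Q i j \<equiv> P (P \<Psi> (Y j)) (Y i)"

lemma u_eq:
  assumes X: "X \<in> dom_x \<epsilon>0" and y0: "norm y0 < \<epsilon>0"
  shows "dd (\<lambda>y. dd (\<lambda>y'. \<phi> X y') y (axis j 1)) y0 (axis i 1) = Q i j (snd X, y0)"
proof -
  have sX: "\<bar>snd X\<bar> < \<epsilon>0" using X by (auto simp: dom_x_def mem_Times_iff)
  have inner1: "dd (\<lambda>y'. \<phi> X y') y (axis j 1) = fst X \<bullet> axis j 1 + P \<Psi> (Y j) (snd X, y)" if y: "norm y < \<epsilon>0" for y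
  proof -
    have d0: "((\<lambda>y'. fst X \<bullet> y') has_derivative (\<lambda>h. fst X \<bullet> h)) (at y)"
      by (auto intro!: derivative_eq_intros)
    have "dd (\<lambda>y'. \<phi> X y') y (axis j 1) = (\<lambda>h. fst X \<bullet> h + fd \<Psi> (snd X, y) (0, h)) (axis j 1)"
      unfolding phi_eq by (rule dd_has_derivative[OF has_derivative_add[OF d0 dPsi_y[OF sX y]]])
    then show ?thesis by (simp add: P_def Y_def)
  qed
  have "dd (\<lambda>y. dd (\<lambda>y'. \<phi> X y') y (axis j 1)) y0 (axis i 1) = (\<lambda>h. fd (P \<Psi> (Y j)) (snd X, y0) (0, h)) (axis i 1)"
    by (rule dd_local[where S="ball 0 \<epsilon>0" and g="\<lambda>y. fst X \<bullet> axis j 1 + P \<Psi> (Y j) (snd X, y)"])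
       (use inner1 y0 sX in \<open>auto intro!: dG_y Ck_all_P Ck\<Psi>\<close>)
  then show ?thesis by (simp add: P_def Y_def)
qed

lemma bourgain_trans:
  assumes b: "bourgain_at \<phi> X0 y0" and X0: "X0 \<in> dom_x \<epsilon>0" and y0: "norm y0 < \<epsilon>0"
  shows "\<exists>C. \<forall>i j. P (P (Q i j) T) T (snd X0, y0) = C * P (Q i j) T (snd X0, y0)"
proof -
  have RQ: "Ck k S0 (Q i j)" for k i j by (intro Ck_all_P Ck\<Psi>)
  have RQ2: "Ck k S0 (P (Q i j) T)" for k i j by (intro Ck_all_P RQ)
  have g1: "Gder \<phi> y0 (\<lambda>X. dd (\<lambda>y. dd (\<lambda>y'. \<phi> X y') y (axis j 1)) y0 (axis i 1)) X = P (Q i j) T (snd X, y0)"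
    if "X \<in> dom_x \<epsilon>0" for X i j
    by (rule Gder_lem[OF RQ _ y0 that]) (rule u_eq[OF _ y0])
  have g2: "Gder \<phi> y0 (Gder \<phi> y0 (\<lambda>X. dd (\<lambda>y. dd (\<lambda>y'. \<phi> X y') y (axis j 1)) y0 (axis i 1))) X0
      = P (P (Q i j) T) T (snd X0, y0)" for i j
    by (rule Gder_lem[OF RQ2 _ y0 X0]) (rule g1)
  from b obtain C where "\<forall>i j. Gder \<phi> y0 (Gder \<phi> y0 (\<lambda>X. dd (\<lambda>y. dd (\<lambda>y'. \<phi> X y') y (axis j 1)) y0 (axis i 1))) X0
      = C * Gder \<phi> y0 (\<lambda>X. dd (\<lambda>y. dd (\<lambda>y'. \<phi> X y') y (axis j 1)) y0 (axis i 1)) X0"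
    unfolding bourgain_at_def Let_def by blast
  then show ?thesis using g1[OF X0] g2 by auto
qed

end

lemma vec_sum_axis: "(\<chi> i. g i) = (\<Sum>i\<in>UNIV. g i *\<^sub>R axis i (1::real))"
  by (simp add: vec_eq_iff axis_def if_distrib cong: if_cong)

lemma vec_sum_axis2: "(\<chi> i j. g i j) = (\<Sum>i\<in>UNIV. \<Sum>j\<in>UNIV. g i j *\<^sub>R axis i (axis j (1::real)))"
proof -
  have "(\<Sum>i\<in>UNIV. \<Sum>j\<in>UNIV. g i j *\<^sub>R axis i (axis j (1::real))) $ a $ b = g a b" for a b
  proof -
    have ax: "(\<Sum>j\<in>UNIV. g i j * (axis i (axis j (1::real)) $ a $ b)) = (if i = a then g i b else 0)" for i
      by (cases "i = a") (simp_all add: axis_def if_distrib cong: if_cong)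
    have "(\<Sum>i\<in>UNIV. \<Sum>j\<in>UNIV. g i j *\<^sub>R axis i (axis j (1::real))) $ a $ b
        = (\<Sum>i\<in>UNIV. \<Sum>j\<in>UNIV. g i j * (axis i (axis j (1::real)) $ a $ b))"
      by (simp add: sum_component)
    also have "\<dots> = (\<Sum>i\<in>UNIV. if i = a then g i b else 0)" by (simp only: ax)
    also have "\<dots> = g a b" by simp
    finally show ?thesis .
  qed
  then show ?thesis by (simp add: vec_eq_iff)
qed

lemma has_derivative_vec_lambda:
  fixes f :: "'n::finite \<Rightarrow> 'a::real_normed_vector \<Rightarrow> real"
  assumes "\<And>i. ((\<lambda>x. f i x) has_derivative f' i) (at a)"
  shows "((\<lambda>x. (\<chi> i. f i x)) has_derivative (\<lambda>h. \<chi> i. f' i h)) (at a)"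
proof -
  have "((\<lambda>x. \<Sum>i\<in>UNIV. f i x *\<^sub>R axis i (1::real)) has_derivative (\<lambda>h. \<Sum>i\<in>UNIV. f' i h *\<^sub>R axis i (1::real))) (at a)"
    by (intro has_derivative_sum has_derivative_scaleR_left assms)
  then show ?thesis by (simp only: vec_sum_axis[symmetric])
qed

lemma has_derivative_vec_lambda2:
  fixes f :: "'n::finite \<Rightarrow> 'm::finite \<Rightarrow> 'a::real_normed_vector \<Rightarrow> real"
  assumes "\<And>i j. ((\<lambda>x. f i j x) has_derivative f' i j) (at a)"
  shows "((\<lambda>x. (\<chi> i j. f i j x)) has_derivative (\<lambda>h. \<chi> i j. f' i j h)) (at a)"
proof -
  have "((\<lambda>x. \<Sum>i\<in>UNIV. \<Sum>j\<in>UNIV. f i j x *\<^sub>R axis i (axis j (1::real))) has_derivative (\<lambda>h. \<Sum>i\<in>UNIV. \<Sum>j\<in>UNIV. f' i j h *\<^sub>R axis i (axis j (1::real)))) (at a)"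
    by (intro has_derivative_sum has_derivative_scaleR_left assms)
  then show ?thesis by (simp only: vec_sum_axis2[symmetric])
qed

lemma fd_eqon: "open S \<Longrightarrow> z \<in> S \<Longrightarrow> (\<And>z. z \<in> S \<Longrightarrow> f z = g z) \<Longrightarrow> Ck (Suc k) S g \<Longrightarrow> fd f z = fd g z"
  using fd_local Ck_has_derivative by metis

locale ph2 = ph \<psi> \<epsilon>0 for \<psi> :: "real \<Rightarrow> real^'n::finite \<Rightarrow> real" and \<epsilon>0 +
  assumes dim: "CARD('n) \<ge> 2"
    and psi0: "\<forall>y\<in>ball 0 \<epsilon>0. \<psi> 0 y = 0"
    and h2: "H2 \<phi> \<epsilon>0"
    and bo: "\<forall>X\<in>dom_x \<epsilon>0. \<forall>y0\<in>ball 0 \<epsilon>0. bourgain_at \<phi> X y0"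
begin

abbreviation "Nf i j \<equiv> P (P (P \<Psi> T) (Y j)) (Y i)"
abbreviation "Bf i j \<equiv> P (Q i j) T"

lemma E1: assumes z: "z \<in> S0" shows "Bf i j z = Nf i j z"
proof -
  have S: "open S0" by (simp add: open_Times)
  have c1: "fd (\<lambda>z. fd (P \<Psi> (Y j)) z (Y i)) z T = fd (\<lambda>z. fd (P \<Psi> (Y j)) z T) z (Y i)"
    by (rule clairaut[OF _ z]) (intro Ck_all_P Ck\<Psi>)
  have c2: "P (P \<Psi> (Y j)) T z' = P (P \<Psi> T) (Y j) z'" if "z' \<in> S0" for z'
    unfolding P_def by (rule clairaut[OF Ck\<Psi> that])
  have "fd (P (P \<Psi> (Y j)) T) z = fd (P (P \<Psi> T) (Y j)) z"
    apply (rule fd_eqon[OF S z, where k=0])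
     apply (rule c2, assumption)
    apply (intro Ck_all_P Ck\<Psi>)
    done
  then show ?thesis using c1 by (simp add: P_def)
qed

lemma E2: assumes z: "z \<in> S0" shows "P (Nf i j) (Y k) z = P (Nf k j) (Y i) z"
proof -
  have "fd (\<lambda>z. fd (P (P \<Psi> T) (Y j)) z (Y i)) z (Y k) = fd (\<lambda>z. fd (P (P \<Psi> T) (Y j)) z (Y k)) z (Y i)"
    by (rule clairaut[OF _ z]) (intro Ck_all_P Ck\<Psi>)
  then show ?thesis by (simp add: P_def)
qed

lemma dy_sum:
  assumes "Ck (Suc k) S0 G" "z \<in> S0"
  shows "fd G z (0, h) = (\<Sum>i\<in>UNIV. h $ i * P G (Y i) z)"
proof -
  have lin: "linear (fd G z)" using Ck_has_derivative[OF assms] has_derivative_linear by blast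
  have "(0::real, h) = (\<Sum>i\<in>UNIV. h $ i *\<^sub>R Y i)"
    using basis_expansion[of h] by (simp add: Y_def prod_eq_iff fst_sum snd_sum scalar_mult_eq_scaleR)
  then have "fd G z (0, h) = fd G z (\<Sum>i\<in>UNIV. h $ i *\<^sub>R Y i)" by simp
  also have "\<dots> = (\<Sum>i\<in>UNIV. h $ i * P G (Y i) z)"
    by (simp add: linear_sum[OF lin] linear_scale[OF lin] P_def)
  finally show ?thesis .
qed

lemma dt_eq:
  assumes "Ck (Suc k) S0 G" "z \<in> S0"
  shows "fd G z (h, 0) = h * P G T z"
proof -
  have lin: "linear (fd G z)" using Ck_has_derivative[OF assms] has_derivative_linear by blast
  show ?thesis using linear_scale[OF lin, of h T] by (simp add: T_def P_def)
qed

lemma vanish_y: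
  assumes G: "Ck (Suc k) S0 G" and z: "\<And>y. norm y < \<epsilon>0 \<Longrightarrow> G (0, y) = 0" and y: "norm y < \<epsilon>0"
  shows "P G (Y j) (0, y) = 0"
proof -
  have d1: "((\<lambda>y'. G (0, y')) has_derivative (\<lambda>h. fd G (0, y) (0, h))) (at y)"
    by (rule restrict_y[OF G]) (use y eps in auto)
  have d2: "((\<lambda>y'. G (0, y')) has_derivative (\<lambda>h. 0)) (at y)"
    by (rule fd_cong[where S="ball 0 \<epsilon>0" and f="\<lambda>_. 0"]) (use y z in auto)
  have "(\<lambda>h. fd G (0, y) (0, h)) = (\<lambda>h. 0)" using has_derivative_unique[OF d1 d2] .
  then show ?thesis by (simp add: P_def Y_def fun_eq_iff)
qed

lemma Psi_y0: "norm y < \<epsilon>0 \<Longrightarrow> P \<Psi> (Y j) (0, y) = 0"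
  by (rule vanish_y[OF Ck\<Psi>]) (use psi0 in auto)

lemma Q0: "norm y < \<epsilon>0 \<Longrightarrow> Q i j (0, y) = 0"
  apply (rule vanish_y[where G="P \<Psi> (Y j)" and k=0])
    apply (intro Ck_all_P Ck\<Psi>)
   apply (auto intro: Psi_y0)
  done

end

context ph2 begin

definition "Nm t y = (\<chi> i j. Nf i j (t, y))"

lemma det_Nm: "\<bar>t\<bar> < \<epsilon>0 \<Longrightarrow> norm y < \<epsilon>0 \<Longrightarrow> det (Nm t y) \<noteq> 0"
  unfolding Nm_def using H2_trans[OF h2] by blast

lemma Nm_nz: "\<bar>t\<bar> < \<epsilon>0 \<Longrightarrow> norm y < \<epsilon>0 \<Longrightarrow> Nm t y \<noteq> 0"
proof
  assume "\<bar>t\<bar> < \<epsilon>0" "norm y < \<epsilon>0" "Nm t y = 0"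
  moreover have "det (0::real^'n^'n) = 0"
    by (rule det_zero_row(1)[of undefined]) (simp add: row_def vec_eq_iff)
  ultimately show False using det_Nm by metis
qed

lemma bo': assumes "\<bar>t\<bar> < \<epsilon>0" "norm y < \<epsilon>0"
  shows "\<exists>C. \<forall>i j. P (Bf i j) T (t, y) = C * Bf i j (t, y)"
proof -
  have X: "(0::real^'n, t) \<in> dom_x \<epsilon>0" using assms eps by (simp add: dom_x_def)
  show ?thesis using bourgain_trans[OF bo[rule_format, OF X] X assms(2)] assms by simp
qed

lemma dNm:
  assumes t: "\<bar>t\<bar> < \<epsilon>0" and y: "norm y < \<epsilon>0"
  obtains C where "((\<lambda>t. Nm t y) has_derivative (\<lambda>h. h *\<^sub>R (C *\<^sub>R Nm t y))) (at t)"
proof -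
  obtain C where C: "\<And>i j. P (Bf i j) T (t, y) = C * Bf i j (t, y)" using bo'[OF t y] by blast
  have z: "(t, y) \<in> S0" using t y by simp
  have S: "open S0" by (simp add: open_Times)
  have "((\<lambda>t. Nf i j (t, y)) has_derivative (\<lambda>h. h * (C * Nf i j (t, y)))) (at t)" for i j
  proof -
    have d: "((\<lambda>t. Nf i j (t, y)) has_derivative (\<lambda>h. fd (Nf i j) (t, y) (h, 0))) (at t)"
      by (rule restrict_t[OF _ z, where k=0]) (intro Ck_all_P Ck\<Psi>)
    have "fd (Nf i j) (t, y) (h, 0) = h * P (Nf i j) T (t, y)" for h
      by (rule dt_eq[OF _ z, where k=0]) (intro Ck_all_P Ck\<Psi>)
    moreover have "P (Nf i j) T (t, y) = P (Bf i j) T (t, y)"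
    proof -
      have "fd (Nf i j) (t, y) = fd (Bf i j) (t, y)"
        apply (rule fd_eqon[OF S z, where k=0])
         apply (rule E1[symmetric], assumption)
        apply (intro Ck_all_P Ck\<Psi>)
        done
      then show ?thesis by (simp add: P_def)
    qed
    ultimately show ?thesis using d C E1[OF z] by simp
  qed
  then have "((\<lambda>t. Nm t y) has_derivative (\<lambda>h. \<chi> i j. h * (C * Nf i j (t, y)))) (at t)"
    unfolding Nm_def by (rule has_derivative_vec_lambda2)
  moreover have "(\<lambda>h. \<chi> i j. h * (C * Nf i j (t, y))) = (\<lambda>h. h *\<^sub>R (C *\<^sub>R Nm t y))"
    by (simp add: fun_eq_iff vec_eq_iff Nm_def)
  ultimately show ?thesis using that by metis
qed

lemma S3:
  assumes t: "\<bar>t\<bar> < \<epsilon>0" and y: "norm y < \<epsilon>0"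
  shows "Nm t y = (norm (Nm t y) / norm (Nm 0 y)) *\<^sub>R Nm 0 y"
proof -
  define u where "u t = inverse (norm (Nm t y)) *\<^sub>R Nm t y" for t
  have du: "(u has_derivative (\<lambda>h. 0)) (at s within ball 0 \<epsilon>0)" if s: "s \<in> ball 0 \<epsilon>0" for s
  proof -
    have s': "\<bar>s\<bar> < \<epsilon>0" using s by simp
    obtain C where d: "((\<lambda>t. Nm t y) has_derivative (\<lambda>h. h *\<^sub>R (C *\<^sub>R Nm s y))) (at s)"
      using dNm[OF s' y] by blast
    have nz: "Nm s y \<noteq> 0" using Nm_nz[OF s' y] .
    have dn: "((\<lambda>t. norm (Nm t y)) has_derivative (\<lambda>h. (h *\<^sub>R (C *\<^sub>R Nm s y)) \<bullet> sgn (Nm s y))) (at s)"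
      using diff_chain_at[OF d has_derivative_norm[OF nz]] by (simp add: o_def)
    have nn: "norm (Nm s y) \<noteq> 0" using nz by simp
    have di: "((\<lambda>t. inverse (norm (Nm t y))) has_derivative
       (\<lambda>h. - (inverse (norm (Nm s y)) * ((h *\<^sub>R (C *\<^sub>R Nm s y)) \<bullet> sgn (Nm s y)) * inverse (norm (Nm s y))))) (at s)"
      using Deriv.has_derivative_inverse[OF nn dn] .
    have "(u has_derivative (\<lambda>h. inverse (norm (Nm s y)) *\<^sub>R (h *\<^sub>R (C *\<^sub>R Nm s y))
        + (- (inverse (norm (Nm s y)) * ((h *\<^sub>R (C *\<^sub>R Nm s y)) \<bullet> sgn (Nm s y)) * inverse (norm (Nm s y)))) *\<^sub>R Nm s y)) (at s)"
      unfolding u_def[abs_def] using has_derivative_scaleR[OF di d] .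
    moreover have "(\<lambda>h. inverse (norm (Nm s y)) *\<^sub>R (h *\<^sub>R (C *\<^sub>R Nm s y))
        + (- (inverse (norm (Nm s y)) * ((h *\<^sub>R (C *\<^sub>R Nm s y)) \<bullet> sgn (Nm s y)) * inverse (norm (Nm s y)))) *\<^sub>R Nm s y) = (\<lambda>h. 0)"
    proof -
      have ns: "Nm s y \<bullet> sgn (Nm s y) = norm (Nm s y)"
        using nn by (simp add: sgn_div_norm divide_inverse power2_eq_square flip: power2_norm_eq_inner)
      have hc: "(h *\<^sub>R (C *\<^sub>R Nm s y)) \<bullet> sgn (Nm s y) = h * C * norm (Nm s y)" for h
        by (simp add: ns)
      have e1: "inverse (norm (Nm s y)) * (h * C * norm (Nm s y)) * inverse (norm (Nm s y)) = inverse (norm (Nm s y)) * h * C" for h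
        using nn by (simp add: field_simps)
      show ?thesis
      proof (rule ext)
        fix h
        have a: "inverse (norm (Nm s y)) *\<^sub>R (h *\<^sub>R (C *\<^sub>R Nm s y)) = (inverse (norm (Nm s y)) * h * C) *\<^sub>R Nm s y"
          by (simp add: algebra_simps)
        have b: "- (inverse (norm (Nm s y)) * ((h *\<^sub>R (C *\<^sub>R Nm s y)) \<bullet> sgn (Nm s y)) * inverse (norm (Nm s y))) = - (inverse (norm (Nm s y)) * h * C)"
          by (simp only: hc e1)
        show "inverse (norm (Nm s y)) *\<^sub>R (h *\<^sub>R (C *\<^sub>R Nm s y))
          + (- (inverse (norm (Nm s y)) * ((h *\<^sub>R (C *\<^sub>R Nm s y)) \<bullet> sgn (Nm s y)) * inverse (norm (Nm s y)))) *\<^sub>R Nm s y = 0"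
          by (simp only: a b) simp
      qed
    qed
    ultimately show ?thesis by (simp add: has_derivative_at_withinI)
  qed
  obtain c where c: "\<forall>x\<in>ball 0 \<epsilon>0. u x = c"
    using has_derivative_zero_constant[OF convex_ball du] by blast
  have "u t = u 0" using c t eps by simp
  have "Nm t y = norm (Nm t y) *\<^sub>R (inverse (norm (Nm t y)) *\<^sub>R Nm t y)" using Nm_nz[OF t y] by simp
  also have "\<dots> = norm (Nm t y) *\<^sub>R (inverse (norm (Nm 0 y)) *\<^sub>R Nm 0 y)" using \<open>u t = u 0\<close> by (simp add: u_def)
  also have "\<dots> = (norm (Nm t y) / norm (Nm 0 y)) *\<^sub>R Nm 0 y" by (simp add: divide_inverse)
  finally show ?thesis .
qed

end

lemma det_row_prop:
  fixes A :: "real^'n::finite^'n"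
  assumes ik: "i \<noteq> k" and r: "\<And>j. A $ i $ j = c * A $ k $ j"
  shows "det A = 0"
proof -
  have "det (\<chi> m. if m = i then row i A + (- c) *s row k A else row m A) = det A"
    by (rule det_row_operation[OF ik])
  moreover have "det (\<chi> m. if m = i then row i A + (- c) *s row k A else row m A) = 0"
    by (rule det_zero_row(1)[of i]) (simp add: row_def vec_eq_iff r)
  ultimately show ?thesis by simp
qed

lemma exists_other:
  fixes k :: "'n::finite"
  assumes "CARD('n) \<ge> 2"
  obtains i where "i \<noteq> k"
proof -
  have "UNIV \<noteq> {k}"
  proof
    assume "UNIV = {k}"
    then have "CARD('n) = 1" by (metis card.empty card_insert_disjoint empty_iff finite.emptyI One_nat_def)
    with assms show False by simp
  qed
  then show ?thesis using that by blast
qed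

context ph2 begin

definition "av t y = norm (Nm t y) / norm (Nm 0 y)"

lemma S3e: "\<bar>t\<bar> < \<epsilon>0 \<Longrightarrow> norm y < \<epsilon>0 \<Longrightarrow> Nf i j (t, y) = av t y * Nf i j (0, y)"
proof -
  assume a: "\<bar>t\<bar> < \<epsilon>0" "norm y < \<epsilon>0"
  have "Nm t y $ i $ j = (av t y *\<^sub>R Nm 0 y) $ i $ j" using S3[OF a] by (simp add: av_def)
  then show ?thesis by (simp add: Nm_def)
qed

lemma dNm_y:
  assumes "\<bar>t\<bar> < \<epsilon>0" "norm y < \<epsilon>0"
  shows "((\<lambda>y. Nm t y) has_derivative (\<lambda>h. \<chi> i j. fd (Nf i j) (t, y) (0, h))) (at y)"
  unfolding Nm_def
proof (rule has_derivative_vec_lambda2)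
  fix i j
  have z: "(t, y) \<in> S0" using assms by simp
  show "((\<lambda>x. Nf i j (t, x)) has_derivative (\<lambda>h. fd (Nf i j) (t, y) (0, h))) (at y)"
    by (rule restrict_y[OF _ z, where k=0]) (intro Ck_all_P Ck\<Psi>)
qed

lemma S4:
  assumes t: "\<bar>t\<bar> < \<epsilon>0" and y: "norm y < \<epsilon>0"
  shows "av t y = av t 0"
proof -
  have S: "open (ball (0::real^'n) \<epsilon>0)" by simp
  define b where "b y = (Nm t y \<bullet> Nm 0 y) / (Nm 0 y \<bullet> Nm 0 y)" for y
  have bval: "b y = av t y" if "norm y < \<epsilon>0" for y
  proof -
    have "Nm t y = av t y *\<^sub>R Nm 0 y" using S3[OF t that] by (simp add: av_def)
    moreover have "Nm 0 y \<bullet> Nm 0 y \<noteq> 0" using Nm_nz[of 0 y] that eps by simp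
    ultimately show ?thesis by (simp add: b_def)
  qed
  have bdiff: "b differentiable (at y)" if "norm y < \<epsilon>0" for y
  proof -
    have "(\<lambda>y. Nm t y) differentiable (at y)" using dNm_y[OF t that] differentiableI by blast
    moreover have "(\<lambda>y. Nm 0 y) differentiable (at y)" using dNm_y[of 0 y] that eps differentiableI by auto
    moreover have "Nm 0 y \<bullet> Nm 0 y \<noteq> 0" using Nm_nz[of 0 y] that eps by simp
    ultimately show ?thesis unfolding b_def[abs_def] by simp
  qed
  have db0: "(b has_derivative (\<lambda>h. 0)) (at y)" if yy: "norm y < \<epsilon>0" for y
  proof -
    define b' where "b' = fd b y"
    have db: "(b has_derivative b') (at y)"
      using bdiff[OF yy] unfolding b'_def fd_def by (simp add: frechet_derivative_works)
    have zt: "(t, y) \<in> S0" and z0: "(0, y) \<in> S0" using t yy eps by auto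
    have star: "P (Nf i j) (Y k) (t, y) = b y * P (Nf i j) (Y k) (0, y) + b' (axis k 1) * Nf i j (0, y)" for i j k
    proof -
      have d1: "((\<lambda>y'. Nf i j (t, y')) has_derivative (\<lambda>h. fd (Nf i j) (t, y) (0, h))) (at y)"
        by (rule restrict_y[OF _ zt, where k=0]) (intro Ck_all_P Ck\<Psi>)
      have d0: "((\<lambda>y'. Nf i j (0, y')) has_derivative (\<lambda>h. fd (Nf i j) (0, y) (0, h))) (at y)"
        by (rule restrict_y[OF _ z0, where k=0]) (intro Ck_all_P Ck\<Psi>)
      have d2: "((\<lambda>y'. b y' * Nf i j (0, y')) has_derivative (\<lambda>h. b y * fd (Nf i j) (0, y) (0, h) + b' h * Nf i j (0, y))) (at y)"
        using has_derivative_mult[OF db d0] .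
      have d3: "((\<lambda>y'. Nf i j (t, y')) has_derivative (\<lambda>h. b y * fd (Nf i j) (0, y) (0, h) + b' h * Nf i j (0, y))) (at y)"
        by (rule fd_cong[OF S _ _ d2]) (use yy S3e[OF t] bval in auto)
      from has_derivative_unique[OF d1 d3]
      have "fd (Nf i j) (t, y) (0, axis k 1) = b y * fd (Nf i j) (0, y) (0, axis k 1) + b' (axis k 1) * Nf i j (0, y)"
        by metis
      then show ?thesis by (simp add: P_def Y_def)
    qed
    have rel: "b' (axis k 1) * Nf i j (0, y) = b' (axis i 1) * Nf k j (0, y)" for i j k
      using star[where i=i and j=j and k=k] star[where i=k and j=j and k=i]
        E2[OF zt, where i=i and j=j and k=k] E2[OF z0, where i=i and j=j and k=k] by simp
    have bz: "b' (axis k 1) = 0" for k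
    proof (rule ccontr)
      assume nz: "b' (axis k 1) \<noteq> 0"
      obtain i where ik: "i \<noteq> k" using exists_other[OF dim] by blast
      have "det (Nm 0 y) = 0"
        by (rule det_row_prop[OF ik, where c="b' (axis i 1) / b' (axis k 1)"])
          (use rel nz in \<open>simp add: Nm_def field_simps\<close>)
      then show False using det_Nm[of 0 y] yy eps by simp
    qed
    have "b' = (\<lambda>h. 0)"
    proof
      fix h :: "real^'n"
      have lin: "linear b'" using db has_derivative_linear by blast
      have "b' h = b' (\<Sum>i\<in>UNIV. h $ i *\<^sub>R axis i 1)"
        using basis_expansion[of h] by (simp add: scalar_mult_eq_scaleR)
      also have "\<dots> = 0" by (simp add: linear_sum[OF lin] linear_scale[OF lin] bz)
      finally show "b' h = 0" .
    qed
    then show ?thesis using db by simp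
  qed
  obtain c where c: "\<forall>x\<in>ball 0 \<epsilon>0. b x = c"
    using has_derivative_zero_constant[OF convex_ball, of 0 \<epsilon>0 b] db0 by (auto intro: has_derivative_at_withinI)
  then have "b y = b 0" using y eps by simp
  then show ?thesis using bval[OF y] bval[of 0] eps by simp
qed

end

context ph2 begin

lemma S4e: "\<bar>t\<bar> < \<epsilon>0 \<Longrightarrow> norm y < \<epsilon>0 \<Longrightarrow> Nf i j (t, y) = av t 0 * Nf i j (0, y)"
  using S3e S4 by metis

lemma av_pos: "\<bar>t\<bar> < \<epsilon>0 \<Longrightarrow> av t 0 > 0"
  using Nm_nz[of t 0] Nm_nz[of 0 0] eps by (simp add: av_def)

lemma dQ_t:
  assumes s: "\<bar>s\<bar> < \<epsilon>0" and y: "norm y < \<epsilon>0"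
  shows "((\<lambda>s. Q i j (s, y)) has_derivative (\<lambda>h. h * (av s 0 * Nf i j (0, y)))) (at s)"
proof -
  have z: "(s, y) \<in> S0" using s y by simp
  have d: "((\<lambda>s. Q i j (s, y)) has_derivative (\<lambda>h. fd (Q i j) (s, y) (h, 0))) (at s)"
    by (rule restrict_t[OF _ z, where k=0]) (intro Ck_all_P Ck\<Psi>)
  have "fd (Q i j) (s, y) (h, 0) = h * (av s 0 * Nf i j (0, y))" for h
  proof -
    have "fd (Q i j) (s, y) (h, 0) = h * P (Q i j) T (s, y)"
      by (rule dt_eq[OF _ z, where k=0]) (intro Ck_all_P Ck\<Psi>)
    also have "P (Q i j) T (s, y) = Nf i j (s, y)" using E1[OF z] .
    also have "\<dots> = av s 0 * Nf i j (0, y)" using S4e[OF s y] .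
    finally show ?thesis .
  qed
  then show ?thesis using d by simp
qed

definition "pq = (SOME pq. Nf (fst pq) (snd pq) (0, 0) \<noteq> 0)"
definition "Npq = Nf (fst pq) (snd pq) (0, 0)"

lemma Npq_nz: "Npq \<noteq> 0"
proof -
  have "Nm 0 0 \<noteq> 0" using Nm_nz[of 0 0] eps by simp
  then obtain i j where "Nf i j (0, 0) \<noteq> 0" unfolding Nm_def by (auto simp: vec_eq_iff)
  then have "\<exists>pq. Nf (fst pq) (snd pq) (0, 0) \<noteq> 0" by (intro exI[of _ "(i,j)"]) simp
  then show ?thesis unfolding Npq_def pq_def by (rule someI_ex)
qed

definition "Af t = Q (fst pq) (snd pq) (t, 0) / Npq"

lemma S5:
  assumes t: "\<bar>t\<bar> < \<epsilon>0" and y: "norm y < \<epsilon>0"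
  shows "Q i j (t, y) = Af t * Nf i j (0, y)"
proof -
  define Z where "Z s = Q i j (s, y) * Npq - Q (fst pq) (snd pq) (s, 0) * Nf i j (0, y)" for s
  have dZ: "(Z has_derivative (\<lambda>h. 0)) (at s within ball 0 \<epsilon>0)" if "s \<in> ball 0 \<epsilon>0" for s
  proof -
    have s: "\<bar>s\<bar> < \<epsilon>0" using that by simp
    have "(Z has_derivative (\<lambda>h. h * (av s 0 * Nf i j (0, y)) * Npq - h * (av s 0 * Nf (fst pq) (snd pq) (0, 0)) * Nf i j (0, y))) (at s)"
      unfolding Z_def[abs_def]
      by (intro has_derivative_diff has_derivative_mult_left dQ_t s y) (use eps in simp)
    moreover have "(\<lambda>h. h * (av s 0 * Nf i j (0, y)) * Npq - h * (av s 0 * Nf (fst pq) (snd pq) (0, 0)) * Nf i j (0, y)) = (\<lambda>h. 0)"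
      by (simp add: Npq_def fun_eq_iff)
    ultimately show ?thesis by (simp add: has_derivative_at_withinI)
  qed
  obtain c where c: "\<forall>x\<in>ball 0 \<epsilon>0. Z x = c"
    using has_derivative_zero_constant[OF convex_ball dZ] by blast
  have "Z t = Z 0" using c t eps by simp
  moreover have "Z 0 = 0" using Q0 y eps by (simp add: Z_def)
  ultimately have "Q i j (t, y) * Npq = Q (fst pq) (snd pq) (t, 0) * Nf i j (0, y)" by (simp add: Z_def)
  then show ?thesis using Npq_nz by (simp add: Af_def field_simps)
qed

lemma dAf:
  assumes t: "\<bar>t\<bar> < \<epsilon>0"
  shows "(Af has_real_derivative av t 0) (at t)"
proof -
  have "((\<lambda>s. Q (fst pq) (snd pq) (s, 0) / Npq) has_derivative (\<lambda>h. h * (av t 0 * Nf (fst pq) (snd pq) (0, 0)) / Npq)) (at t)"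
    using bounded_linear.has_derivative[OF bounded_linear_divide[of Npq] dQ_t[OF t, of 0]] eps by simp
  moreover have "(\<lambda>h. h * (av t 0 * Nf (fst pq) (snd pq) (0, 0)) / Npq) = (\<lambda>h. av t 0 * h)"
    using Npq_nz by (simp add: Npq_def fun_eq_iff)
  ultimately show ?thesis unfolding Af_def[abs_def] has_field_derivative_def by simp
qed

lemma Af0: "Af 0 = 0" using Q0[of 0] eps by (simp add: Af_def)

end

context ph2 begin

definition "hf y = P \<Psi> T (0, y)"
definition "Lf t = (\<chi> j. P \<Psi> (Y j) (t, 0) - Af t * P (P \<Psi> T) (Y j) (0, 0))"
definition "cf t = \<psi> t 0 - Af t * hf 0"

lemma S6:
  assumes t: "\<bar>t\<bar> < \<epsilon>0" and y: "norm y < \<epsilon>0"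
  shows "\<psi> t y = Af t * hf y + Lf t \<bullet> y + cf t"
proof -
  define d where "d j y = P \<Psi> (Y j) (t, y) - Af t * P (P \<Psi> T) (Y j) (0, y)" for j y
  have dd0: "((d j) has_derivative (\<lambda>h. 0)) (at y' within ball 0 \<epsilon>0)" if y': "y' \<in> ball 0 \<epsilon>0" for j y'
  proof -
    have zt: "(t, y') \<in> S0" and z0: "(0, y') \<in> S0" using t y' eps by auto
    have d1: "((\<lambda>y. P \<Psi> (Y j) (t, y)) has_derivative (\<lambda>h. fd (P \<Psi> (Y j)) (t, y') (0, h))) (at y')"
      by (rule restrict_y[OF _ zt, where k=0]) (intro Ck_all_P Ck\<Psi>)
    have d2: "((\<lambda>y. P (P \<Psi> T) (Y j) (0, y)) has_derivative (\<lambda>h. fd (P (P \<Psi> T) (Y j)) (0, y') (0, h))) (at y')"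
      by (rule restrict_y[OF _ z0, where k=0]) (intro Ck_all_P Ck\<Psi>)
    have "((d j) has_derivative (\<lambda>h. fd (P \<Psi> (Y j)) (t, y') (0, h) - Af t * fd (P (P \<Psi> T) (Y j)) (0, y') (0, h))) (at y')"
      unfolding d_def[abs_def] by (intro has_derivative_diff has_derivative_mult_right d1 d2)
    moreover have "fd (P \<Psi> (Y j)) (t, y') (0, h) - Af t * fd (P (P \<Psi> T) (Y j)) (0, y') (0, h) = 0" for h
    proof -
      have "fd (P \<Psi> (Y j)) (t, y') (0, h) = (\<Sum>i\<in>UNIV. h $ i * Q i j (t, y'))"
        by (rule dy_sum[OF _ zt, where k=0]) (intro Ck_all_P Ck\<Psi>)
      moreover have "fd (P (P \<Psi> T) (Y j)) (0, y') (0, h) = (\<Sum>i\<in>UNIV. h $ i * Nf i j (0, y'))"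
        by (rule dy_sum[OF _ z0, where k=0]) (intro Ck_all_P Ck\<Psi>)
      moreover have "Q i j (t, y') = Af t * Nf i j (0, y')" for i using S5 t y' by simp
      ultimately show ?thesis by (simp add: sum_distrib_left algebra_simps)
    qed
    ultimately show ?thesis by (simp add: has_derivative_at_withinI)
  qed
  have dconst: "d j y' = d j 0" if "norm y' < \<epsilon>0" for j y'
  proof -
    obtain c where "\<forall>x\<in>ball 0 \<epsilon>0. d j x = c"
      using has_derivative_zero_constant[OF convex_ball dd0] by blast
    then show ?thesis using that eps by simp
  qed
  have Ld: "Lf t $ j = d j 0" for j by (simp add: Lf_def d_def)
  define G where "G y = \<psi> t y - Af t * hf y - Lf t \<bullet> y" for y
  have dG: "(G has_derivative (\<lambda>h. 0)) (at y' within ball 0 \<epsilon>0)" if y': "y' \<in> ball 0 \<epsilon>0" for y'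
  proof -
    have zt: "(t, y') \<in> S0" and z0: "(0, y') \<in> S0" using t y' eps by auto
    have d1: "((\<lambda>y. \<psi> t y) has_derivative (\<lambda>h. fd \<Psi> (t, y') (0, h))) (at y')"
      using dPsi_y t y' by simp
    have d2: "(hf has_derivative (\<lambda>h. fd (P \<Psi> T) (0, y') (0, h))) (at y')"
      unfolding hf_def[abs_def] by (rule restrict_y[OF _ z0, where k=0]) (intro Ck_all_P Ck\<Psi>)
    have d3: "((\<lambda>y. Lf t \<bullet> y) has_derivative (\<lambda>h. Lf t \<bullet> h)) (at y')"
      by (auto intro!: derivative_eq_intros)
    have "(G has_derivative (\<lambda>h. fd \<Psi> (t, y') (0, h) - Af t * fd (P \<Psi> T) (0, y') (0, h) - Lf t \<bullet> h)) (at y')"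
      unfolding G_def[abs_def] by (intro has_derivative_diff has_derivative_mult_right d1 d2 d3)
    moreover have "fd \<Psi> (t, y') (0, h) - Af t * fd (P \<Psi> T) (0, y') (0, h) - Lf t \<bullet> h = 0" for h
    proof -
      have "fd \<Psi> (t, y') (0, h) = (\<Sum>j\<in>UNIV. h $ j * P \<Psi> (Y j) (t, y'))"
        by (rule dy_sum[OF Ck\<Psi>[of "Suc 0"] zt])
      moreover have "fd (P \<Psi> T) (0, y') (0, h) = (\<Sum>j\<in>UNIV. h $ j * P (P \<Psi> T) (Y j) (0, y'))"
        by (rule dy_sum[OF _ z0, where k=0]) (intro Ck_all_P Ck\<Psi>)
      moreover have "Lf t \<bullet> h = (\<Sum>j\<in>UNIV. h $ j * d j y')"
        using dconst y' Ld by (simp add: inner_vec_def mult.commute)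
      ultimately show ?thesis by (simp add: d_def sum_distrib_left algebra_simps sum_subtractf)
    qed
    ultimately show ?thesis by (simp add: has_derivative_at_withinI)
  qed
  obtain c where c: "\<forall>x\<in>ball 0 \<epsilon>0. G x = c"
    using has_derivative_zero_constant[OF convex_ball dG] by blast
  have "G y = G 0" using c y eps by simp
  then show ?thesis by (simp add: G_def cf_def)
qed

end

lemma Ck_id: "open S \<Longrightarrow> Ck k S (\<lambda>x. x)"
proof (induction k)
  case 0 then show ?case by (simp add: continuous_on_id)
next
  case (Suc k)
  show ?case
    by (rule Ck_SucI[where D="\<lambda>x v. v"]) (auto intro: Suc.prems Ck_const has_derivative_ident)
qed

lemma Ck_pair: "Ck k S f \<Longrightarrow> Ck k S g \<Longrightarrow> Ck k S (\<lambda>x. (f x, g x))"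
proof -
  assume f: "Ck k S f" and g: "Ck k S g"
  have "Ck k S (\<lambda>x. (f x, 0))" by (rule Ck_linear[OF _ f]) (intro bounded_linear_Pair bounded_linear_ident bounded_linear_zero)
  moreover have "Ck k S (\<lambda>x. (0, g x))" by (rule Ck_linear[OF _ g]) (intro bounded_linear_Pair bounded_linear_ident bounded_linear_zero)
  ultimately have "Ck k S (\<lambda>x. (f x, 0) + (0, g x))" by (rule Ck_add)
  then show ?thesis by simp
qed

lemma Ck_fst: "open S \<Longrightarrow> Ck k S (\<lambda>x. fst x)"
  using Ck_linear[OF bounded_linear_fst Ck_id] by blast

lemma Ck_snd: "open S \<Longrightarrow> Ck k S (\<lambda>x. snd x)"
  using Ck_linear[OF bounded_linear_snd Ck_id] by blast

lemma Ck_vec: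
  fixes f :: "'n::finite \<Rightarrow> 'a::real_normed_vector \<Rightarrow> real"
  shows "open S \<Longrightarrow> (\<And>i. Ck k S (f i)) \<Longrightarrow> Ck k S (\<lambda>x. \<chi> i. f i x)"
proof -
  assume S: "open S" and f: "\<And>i. Ck k S (f i)"
  have "Ck k S (\<lambda>x. \<Sum>i\<in>UNIV. f i x *\<^sub>R axis i (1::real))"
    by (intro Ck_sum Ck_scaleR f Ck_const S) auto
  then show ?thesis by (simp only: vec_sum_axis[symmetric])
qed

lemma open_image_deriv:
  fixes F :: "'a::euclidean_space \<Rightarrow> 'b::euclidean_space"
  assumes V: "open V" and c: "continuous_on V F"
    and d: "\<And>y. y \<in> V \<Longrightarrow> \<exists>F' g'. (F has_derivative F') (at y) \<and> bounded_linear g' \<and> F' \<circ> g' = id"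
  shows "open (F ` V)"
proof -
  have "F y \<in> interior (F ` V)" if y: "y \<in> V" for y
  proof -
    obtain F' g' where "(F has_derivative F') (at y)" "bounded_linear g'" "F' \<circ> g' = id" using d[OF y] by blast
    then show ?thesis using sussmann_open_mapping[OF V c y, of F' g' V] V y by (simp add: interior_open)
  qed
  then have "F ` V \<subseteq> interior (F ` V)" by blast
  then show ?thesis using interior_subset by (metis open_interior subset_antisym)
qed

lemma open_image_real:
  fixes A :: "real \<Rightarrow> real"
  assumes V: "open V" and d: "\<And>t. t \<in> V \<Longrightarrow> (A has_real_derivative D t) (at t)" "\<And>t. t \<in> V \<Longrightarrow> D t \<noteq> 0"
  shows "open (A ` V)"
proof (rule open_image_deriv[OF V])
  show "continuous_on V A"
    using d(1) by (meson DERIV_isCont continuous_at_imp_continuous_on)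
  fix t assume t: "t \<in> V"
  have "(A has_derivative (\<lambda>h. D t * h)) (at t)" using d(1)[OF t] by (simp add: has_field_derivative_def)
  moreover have "bounded_linear (\<lambda>h. h / D t)" by (rule bounded_linear_divide)
  moreover have "(\<lambda>h. D t * h) \<circ> (\<lambda>h. h / D t) = id" using d(2)[OF t] by (auto simp: fun_eq_iff)
  ultimately show "\<exists>F' g'. (A has_derivative F') (at t) \<and> bounded_linear g' \<and> F' \<circ> g' = id" by blast
qed

lemma Ck_diff: "Ck k S f \<Longrightarrow> Ck k S g \<Longrightarrow> Ck k S (\<lambda>x. f x - g x)"
proof -
  assume f: "Ck k S f" and g: "Ck k S g"
  have "Ck k S (\<lambda>x. - g x)" by (rule Ck_linear[OF bounded_linear_minus[OF bounded_linear_ident] g])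
  from Ck_add[OF f this] show ?thesis by simp
qed

context ph2 begin

abbreviation "B0 \<equiv> ball (0::real) \<epsilon>0"
abbreviation "YB \<equiv> ball (0::real^'n) \<epsilon>0"

lemma Ck_t0: "(\<And>k. Ck k S0 G) \<Longrightarrow> Ck k B0 (\<lambda>t. G (t, 0))"
  by (rule Ck_compose[of k S0 G B0 "\<lambda>t. (t, 0)"]) (use eps in \<open>auto intro!: Ck_pair Ck_id Ck_const\<close>)

lemma Ck_0y: "(\<And>k. Ck k S0 G) \<Longrightarrow> Ck k YB (\<lambda>y. G (0, y))"
  by (rule Ck_compose[of k S0 G YB "\<lambda>y. (0, y)"]) (use eps in \<open>auto intro!: Ck_pair Ck_id Ck_const\<close>)

lemma CkAf: "Ck k B0 Af"
proof -
  have "Ck k B0 (\<lambda>t. Q (fst pq) (snd pq) (t, 0) * inverse Npq)"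
    by (intro Ck_mult Ck_const Ck_t0) (auto intro!: Ck_all_P Ck\<Psi>)
  then show ?thesis by (rule Ck_cong) (simp add: Af_def divide_inverse)
qed

lemma CkLf: "Ck k B0 Lf"
  unfolding Lf_def[abs_def]
  by (intro Ck_vec Ck_diff Ck_mult CkAf Ck_const Ck_t0) (auto intro!: Ck_all_P Ck\<Psi>)

lemma Ckhf: "Ck k YB hf"
  unfolding hf_def[abs_def] by (intro Ck_0y) (auto intro!: Ck_all_P Ck\<Psi>)

lemma Ckcf: "Ck k B0 cf"
proof -
  have "Ck k B0 (\<lambda>t. \<Psi> (t, 0) - Af t * hf 0)"
    by (intro Ck_diff Ck_mult CkAf Ck_const Ck_t0 Ck\<Psi>) auto
  then show ?thesis by (rule Ck_cong) (simp add: cf_def)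
qed

lemma Af_mono: "a \<in> B0 \<Longrightarrow> b \<in> B0 \<Longrightarrow> a < b \<Longrightarrow> Af a < Af b"
proof -
  assume a: "a \<in> B0" and b: "b \<in> B0" and ab: "a < b"
  show ?thesis
  proof (rule DERIV_pos_imp_increasing[OF ab])
    fix x assume "a \<le> x" "x \<le> b"
    then have x: "\<bar>x\<bar> < \<epsilon>0" using a b by auto
    show "\<exists>y. DERIV Af x :> y \<and> 0 < y" using dAf[OF x] av_pos[OF x] by blast
  qed
qed

lemma av_nz: "\<bar>t\<bar> < \<epsilon>0 \<Longrightarrow> av t 0 \<noteq> 0"
  using av_pos[of t] by linarith

lemma Af_inj: "inj_on Af B0"
proof (rule linorder_inj_onI)
  fix x y assume "x < y" "x \<in> B0" "y \<in> B0"
  then have "Af x < Af y" using Af_mono by blast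
  then show "Af x \<noteq> Af y" by simp
qed auto

definition "Ib = Af ` B0"
definition "\<tau> = the_inv_into B0 Af"

lemma Ib_open: "open Ib"
  unfolding Ib_def using dAf av_nz by (intro open_image_real[where D="\<lambda>t. av t 0"]) auto

lemma tau1: "s \<in> Ib \<Longrightarrow> \<tau> s \<in> B0 \<and> Af (\<tau> s) = s"
  unfolding Ib_def \<tau>_def using Af_inj the_inv_into_into f_the_inv_into_f by (metis order_refl)

lemma tau2: "t \<in> B0 \<Longrightarrow> \<tau> (Af t) = t"
  unfolding \<tau>_def using Af_inj the_inv_into_f_f by metis

lemma Af_cont: "continuous_on B0 Af"
  by (intro continuous_at_imp_continuous_on ballI DERIV_isCont[OF dAf]) simp

lemma tau_cont: "continuous_on Ib \<tau>"
proof (rule continuous_on_inverse_open_map[OF Af_cont])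
  show "Af ` B0 = Ib" by (simp add: Ib_def)
  show "\<tau> (Af x) = x" if "x \<in> B0" for x using tau2 that .
  fix U' assume "openin (top_of_set B0) U'"
  then have U': "open U'" "U' \<subseteq> B0" using openin_open_eq[of B0] by auto
  have "open (Af ` U')"
    by (rule open_image_real[OF U'(1), where D="\<lambda>t. av t 0"]) (use U' dAf av_nz in auto)
  moreover have "Af ` U' \<subseteq> Ib" using U' by (auto simp: Ib_def)
  ultimately show "openin (top_of_set Ib) (Af ` U')" using openin_open_eq[OF Ib_open] by auto
qed

lemma fdAf: "\<bar>t\<bar> < \<epsilon>0 \<Longrightarrow> fd Af t 1 = av t 0"
  using fd_eq[of Af "\<lambda>h. av t 0 * h" t] dAf by (simp add: has_field_derivative_def)

lemma Cktau: "Ck k Ib \<tau>"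
  by (rule Ck_inv_real[OF Ib_open, where J=B0 and A=Af]) (use CkAf fdAf av_nz tau1 tau_cont in auto)

end

context ph2 begin

definition "Ub = {z :: (real^'n) \<times> real. snd z \<in> Ib \<and> fst z - Lf (\<tau> (snd z)) \<in> YB}"
definition "\<kappa> z = (fst z - Lf (\<tau> (snd z)), \<tau> (snd z))"
definition "\<Phi> z = (fst z + Lf (snd z), Af (snd z))"
definition "ff s = cf (\<tau> s)"

abbreviation "W \<equiv> (UNIV :: (real^'n) set) \<times> Ib"

lemma W_open: "open W" by (simp add: open_Times Ib_open)

lemma Ck_tau_snd: "Ck k W (\<lambda>z. \<tau> (snd z))"
  by (rule Ck_compose[OF Cktau Ck_snd[OF W_open]]) auto

lemma Ck_Lf_tau: "Ck k W (\<lambda>z. Lf (\<tau> (snd z)))"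
  by (rule Ck_compose[OF CkLf Ck_tau_snd]) (use tau1 in auto)

lemma Ck_kW: "Ck k W (\<lambda>z. fst z - Lf (\<tau> (snd z)))"
  by (intro Ck_diff Ck_fst W_open Ck_Lf_tau)

lemma Ub_sub: "Ub \<subseteq> W" by (auto simp: Ub_def)

lemma Ub_open: "open Ub"
proof -
  have "Ck 0 W (\<lambda>z. fst z - Lf (\<tau> (snd z)))" by (rule Ck_kW)
  then have "continuous_on W (\<lambda>z. fst z - Lf (\<tau> (snd z)))" by simp
  then have "open (W \<inter> (\<lambda>z. fst z - Lf (\<tau> (snd z))) -` YB)"
    by (rule continuous_open_preimage[OF _ W_open]) simp
  moreover have "W \<inter> (\<lambda>z. fst z - Lf (\<tau> (snd z))) -` YB = Ub" by (auto simp: Ub_def)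
  ultimately show ?thesis by simp
qed

lemma Ck_kappa: "Ck k Ub \<kappa>"
proof -
  have "Ck k W \<kappa>" unfolding \<kappa>_def[abs_def] by (intro Ck_pair Ck_kW Ck_tau_snd)
  then show ?thesis by (rule Ck_subset[OF _ Ub_open Ub_sub])
qed

lemma Lf0: "Lf 0 = 0"
  using Psi_y0[of 0] eps by (simp add: Lf_def Af0 vec_eq_iff)

lemma tau0: "\<tau> 0 = 0" using tau2[of 0] Af0 eps by simp

lemma zero_Ub: "0 \<in> Ub"
proof -
  have "Af 0 \<in> Af ` B0" using eps by simp
  then have "0 \<in> Ib" using Af0 by (simp add: Ib_def)
  then show ?thesis using eps by (simp add: Ub_def tau0 Lf0)
qed

lemma kappa_in: "z \<in> Ub \<Longrightarrow> \<kappa> z \<in> dom_x \<epsilon>0"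
  using tau1 by (auto simp: Ub_def \<kappa>_def dom_x_def)

lemma Phi_in: "X \<in> dom_x \<epsilon>0 \<Longrightarrow> \<Phi> X \<in> Ub \<and> \<kappa> (\<Phi> X) = X"
proof -
  assume X: "X \<in> dom_x \<epsilon>0"
  then have t: "snd X \<in> B0" and x: "fst X \<in> YB" by (auto simp: dom_x_def mem_Times_iff)
  have i: "Af (snd X) \<in> Ib" using t by (simp add: Ib_def)
  have tt: "\<tau> (Af (snd X)) = snd X" using tau2[OF t] .
  show ?thesis using i tt x by (simp add: Ub_def \<Phi>_def \<kappa>_def)
qed

lemma kappa_img: "\<kappa> ` Ub = dom_x \<epsilon>0"
proof
  show "\<kappa> ` Ub \<subseteq> dom_x \<epsilon>0" using kappa_in by blast
  show "dom_x \<epsilon>0 \<subseteq> \<kappa> ` Ub"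
  proof
    fix X :: "(real^'n) \<times> real" assume "X \<in> dom_x \<epsilon>0"
    then have "\<Phi> X \<in> Ub" "X = \<kappa> (\<Phi> X)" using Phi_in by auto
    then show "X \<in> \<kappa> ` Ub" by (rule rev_image_eqI)
  qed
qed

lemma kappa_inj: "inj_on \<kappa> Ub"
proof
  fix z1 z2 assume z: "z1 \<in> Ub" "z2 \<in> Ub" "\<kappa> z1 = \<kappa> z2"
  then have e: "\<tau> (snd z1) = \<tau> (snd z2)" by (simp add: \<kappa>_def)
  have i: "snd z1 \<in> Ib" "snd z2 \<in> Ib" using z(1,2) by (auto simp: Ub_def)
  have a1: "Af (\<tau> (snd z1)) = snd z1" using tau1[OF i(1)] by blast
  have a2: "Af (\<tau> (snd z2)) = snd z2" using tau1[OF i(2)] by blast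
  have "snd z1 = snd z2" using a1 a2 e by metis
  moreover then have "fst z1 = fst z2" using z(3) by (simp add: \<kappa>_def)
  ultimately show "z1 = z2" by (simp add: prod_eq_iff)
qed

lemma kappa_inv: "X \<in> dom_x \<epsilon>0 \<Longrightarrow> the_inv_into Ub \<kappa> X = \<Phi> X"
  using the_inv_into_f_eq[OF kappa_inj] Phi_in by blast

lemma dom_open: "open (dom_x \<epsilon>0 :: ((real^'n) \<times> real) set)" by (simp add: dom_x_def open_Times)

lemma Ck_Phi: "Ck k (dom_x \<epsilon>0) \<Phi>"
proof -
  have so: "Ck k (dom_x \<epsilon>0) (\<lambda>z::(real^'n) \<times> real. snd z)" by (rule Ck_snd[OF dom_open])
  have im: "(\<lambda>z::(real^'n) \<times> real. snd z) ` dom_x \<epsilon>0 \<subseteq> B0" by (auto simp: dom_x_def)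
  show ?thesis unfolding \<Phi>_def[abs_def]
    by (intro Ck_pair Ck_add Ck_fst dom_open Ck_compose[OF CkLf so im] Ck_compose[OF CkAf so im])
qed

lemma diffeo: "diffeo_on Ub \<kappa>"
  unfolding diffeo_on_def
proof (intro conjI)
  show "open Ub" by (rule Ub_open)
  show "inj_on \<kappa> Ub" by (rule kappa_inj)
  show "open (\<kappa> ` Ub)" using kappa_img dom_open by simp
  show "smooth_on Ub \<kappa>" using Ck_kappa Ck_smooth by blast
  have "Ck k (dom_x \<epsilon>0) (the_inv_into Ub \<kappa>)" for k
    by (rule Ck_cong[OF Ck_Phi]) (simp add: kappa_inv)
  then show "smooth_on (\<kappa> ` Ub) (the_inv_into Ub \<kappa>)" using Ck_smooth kappa_img by metis
qed

lemma snd_Ub: "snd ` Ub = Ib"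
proof
  show "snd ` Ub \<subseteq> Ib" by (auto simp: Ub_def)
  show "Ib \<subseteq> snd ` Ub"
  proof
    fix s assume s: "s \<in> Ib"
    then have "(Lf (\<tau> s), s) \<in> Ub" using eps by (simp add: Ub_def)
    then show "s \<in> snd ` Ub" by (metis image_eqI snd_conv)
  qed
qed

lemma Ck_ff: "Ck k Ib ff"
  unfolding ff_def[abs_def] by (rule Ck_compose[OF Ckcf Cktau]) (use tau1 in auto)

lemma ident:
  assumes z: "z \<in> Ub" and y: "norm y < \<epsilon>0"
  shows "\<phi> (\<kappa> z) y = fst z \<bullet> y + snd z * hf y + 0 + ff (snd z)"
proof -
  have t: "\<bar>\<tau> (snd z)\<bar> < \<epsilon>0" and A: "Af (\<tau> (snd z)) = snd z" using tau1 z by (auto simp: Ub_def)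
  have "\<phi> (\<kappa> z) y = (fst z - Lf (\<tau> (snd z))) \<bullet> y + \<psi> (\<tau> (snd z)) y" by (simp add: phi_eq \<kappa>_def)
  also have "\<dots> = fst z \<bullet> y + snd z * hf y + 0 + ff (snd z)"
    using S6[OF t y] A by (simp add: ff_def inner_diff_left)
  finally show ?thesis .
qed

end

lemma sum_Basis_vec:
  fixes f :: "real^'n::finite \<Rightarrow> real"
  shows "(\<Sum>b\<in>Basis. f b *\<^sub>R b) = (\<chi> i. f (axis i 1))"
proof -
  have B: "(Basis::(real^'n) set) = (\<lambda>i. axis i 1) ` UNIV" by (auto simp: Basis_vec_def)
  have inj: "inj (\<lambda>i::'n. axis i (1::real))" by (auto simp: inj_def axis_eq_axis)
  have "(\<Sum>b\<in>Basis. f b *\<^sub>R b) = (\<Sum>i\<in>UNIV. f (axis i 1) *\<^sub>R axis i (1::real))"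
    unfolding B by (rule sum.reindex[OF inj, unfolded o_def])
  then show ?thesis by (simp only: vec_sum_axis[symmetric])
qed

lemma grad_hd:
  fixes F :: "real^'n::finite \<Rightarrow> real"
  assumes "(F has_derivative F') (at y)"
  shows "grad F y = (\<chi> i. F' (axis i 1))"
  unfolding grad_def using dd_has_derivative[OF assms] sum_Basis_vec by simp

context ph2 begin

lemma dhf: "norm y < \<epsilon>0 \<Longrightarrow> (hf has_derivative (\<lambda>h. fd (P \<Psi> T) (0, y) (0, h))) (at y)"
  unfolding hf_def[abs_def] by (rule restrict_y[where k=0 and S=S0], intro Ck_all_P Ck\<Psi>) (use eps in auto)

lemma grad_hf: "norm y < \<epsilon>0 \<Longrightarrow> grad hf y = (\<chi> i. P (P \<Psi> T) (Y i) (0, y))"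
  using grad_hd[OF dhf] by (simp add: P_def Y_def)

lemma hess_hf: assumes y: "norm y < \<epsilon>0" shows "hess hf y = Nm 0 y"
proof -
  have z: "(0, y) \<in> S0" using y eps by simp
  have in1: "dd hf p (axis j 1) = P (P \<Psi> T) (Y j) (0, p)" if "norm p < \<epsilon>0" for p j
    using dd_has_derivative[OF dhf[OF that]] by (simp add: P_def Y_def)
  have "dd (\<lambda>p. dd hf p (axis j 1)) y (axis i 1) = Nf i j (0, y)" for i j
  proof -
    have "dd (\<lambda>p. dd hf p (axis j 1)) y (axis i 1) = (\<lambda>h. fd (P (P \<Psi> T) (Y j)) (0, y) (0, h)) (axis i 1)"
      by (rule dd_local[where S=YB and g="\<lambda>p. P (P \<Psi> T) (Y j) (0, p)"])
         (use y in1 in \<open>auto intro: restrict_y[OF _ z, where k=0] Ck_all_P Ck\<Psi>\<close>)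
    then show ?thesis by (simp add: P_def Y_def)
  qed
  then show ?thesis by (simp add: hess_def Nm_def vec_eq_iff)
qed

lemma grad_kappa:
  assumes z: "z \<in> Ub" and y: "norm y < \<epsilon>0"
  shows "grad (\<phi> (\<kappa> z)) y = fst z + snd z *\<^sub>R grad hf y"
proof -
  have d0: "((\<lambda>y'. fst z \<bullet> y' + snd z * hf y' + 0 + ff (snd z)) has_derivative
      (\<lambda>h. fst z \<bullet> h + snd z * fd (P \<Psi> T) (0, y) (0, h) + 0 + 0)) (at y)"
    by (intro has_derivative_add has_derivative_mult_right has_derivative_const dhf y)
       (auto intro!: derivative_eq_intros)
  have d1: "((\<lambda>y'. \<phi> (\<kappa> z) y') has_derivative
      (\<lambda>h. fst z \<bullet> h + snd z * fd (P \<Psi> T) (0, y) (0, h) + 0 + 0)) (at y)"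
    by (rule fd_cong[where S=YB, OF _ _ _ d0]) (use y ident[OF z] in auto)
  have "grad (\<lambda>y'. \<phi> (\<kappa> z) y') y = (\<chi> i. fst z \<bullet> axis i 1 + snd z * fd (P \<Psi> T) (0, y) (0, axis i 1))"
    using grad_hd[OF d1] by simp
  also have "\<dots> = fst z + snd z *\<^sub>R grad hf y"
    using grad_hf[OF y] by (simp add: vec_eq_iff inner_axis P_def Y_def)
  finally show ?thesis by simp
qed

lemma grad_omega:
  assumes w: "norm \<omega> < \<epsilon>0" and y: "norm y < \<epsilon>0"
  shows "grad (\<phi> (\<omega>, 0)) y = \<omega>"
proof -
  have d0: "((\<lambda>y'. \<omega> \<bullet> y') has_derivative (\<lambda>h. \<omega> \<bullet> h)) (at y)"
    by (auto intro!: derivative_eq_intros)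
  have d1: "((\<lambda>y'. \<phi> (\<omega>, 0) y') has_derivative (\<lambda>h. \<omega> \<bullet> h)) (at y)"
    by (rule fd_cong[where S=YB, OF _ _ _ d0]) (use y psi0 in \<open>auto simp: phi_eq\<close>)
  show ?thesis using grad_hd[OF d1] by (simp add: vec_eq_iff inner_axis)
qed

lemma line_set:
  assumes y: "norm y < \<epsilon>0" and z: "z \<in> Ub"
  shows "{z' \<in> Ub. grad (\<phi> (\<kappa> z')) y = grad (\<phi> (\<kappa> z)) y}
       = Ub \<inter> {z + s *\<^sub>R (- grad hf y, 1) | s. True}"
proof -
  define g where "g = grad hf y"
  have key: "z' \<in> Ub \<Longrightarrow> (fst z' + snd z' *\<^sub>R g = fst z + snd z *\<^sub>R g) \<longleftrightarrow> (\<exists>s. z' = z + s *\<^sub>R (- g, 1))" for z'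
  proof
    assume e: "fst z' + snd z' *\<^sub>R g = fst z + snd z *\<^sub>R g"
    have "z' = z + (snd z' - snd z) *\<^sub>R (- g, 1)"
    proof (rule prod_eqI)
      show "fst z' = fst (z + (snd z' - snd z) *\<^sub>R (- g, 1))"
        using e by (simp add: algebra_simps)
    qed simp
    then show "\<exists>s. z' = z + s *\<^sub>R (- g, 1)" by blast
  next
    assume "\<exists>s. z' = z + s *\<^sub>R (- g, 1)"
    then obtain s where "z' = z + s *\<^sub>R (- g, 1)" by blast
    then show "fst z' + snd z' *\<^sub>R g = fst z + snd z *\<^sub>R g" by (simp add: algebra_simps)
  qed
  show ?thesis
  proof (intro set_eqI iffI)
    fix z' assume "z' \<in> {z' \<in> Ub. grad (\<phi> (\<kappa> z')) y = grad (\<phi> (\<kappa> z)) y}"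
    then have z': "z' \<in> Ub" and e: "grad (\<phi> (\<kappa> z')) y = grad (\<phi> (\<kappa> z)) y" by auto
    then have "fst z' + snd z' *\<^sub>R g = fst z + snd z *\<^sub>R g"
      using grad_kappa[OF z' y] grad_kappa[OF z y] by (simp add: g_def)
    then obtain s where "z' = z + s *\<^sub>R (- g, 1)" using key[OF z'] by blast
    then show "z' \<in> Ub \<inter> {z + s *\<^sub>R (- grad hf y, 1) | s. True}" using z' by (auto simp: g_def)
  next
    fix z' assume "z' \<in> Ub \<inter> {z + s *\<^sub>R (- grad hf y, 1) | s. True}"
    then have z': "z' \<in> Ub" and "\<exists>s. z' = z + s *\<^sub>R (- g, 1)" by (auto simp: g_def)
    then have "fst z' + snd z' *\<^sub>R g = fst z + snd z *\<^sub>R g" using key by blast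
    then show "z' \<in> {z' \<in> Ub. grad (\<phi> (\<kappa> z')) y = grad (\<phi> (\<kappa> z)) y}"
      using z' grad_kappa[OF z' y] grad_kappa[OF z y] by (simp add: g_def)
  qed
qed

end

context ph2 begin

lemma open_grad:
  "open ((\<lambda>y. - grad hf y) ` YB)"
proof -
  define F0 where "F0 y = - (\<chi> i. P (P \<Psi> T) (Y i) (0, y))" for y
  have img: "(\<lambda>y. - grad hf y) ` YB = F0 ` YB"
    by (rule image_cong[OF refl]) (simp add: F0_def grad_hf)
  have "Ck 0 YB F0"
    unfolding F0_def[abs_def]
    by (rule Ck_linear[OF bounded_linear_minus[OF bounded_linear_ident]], rule Ck_vec, simp, rule Ck_0y)
       (intro Ck_all_P Ck\<Psi>)
  then have cont: "continuous_on YB F0" by simp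
  show ?thesis unfolding img
  proof (rule open_image_deriv[OF _ cont])
    fix y :: "real^'n" assume "y \<in> YB"
    then have y: "norm y < \<epsilon>0" by simp
    have z: "(0, y) \<in> S0" using y eps by simp
    define M where "M = transpose (Nm 0 y)"
    have d: "((\<lambda>y. \<chi> i. P (P \<Psi> T) (Y i) (0, y)) has_derivative (\<lambda>h. \<chi> i. fd (P (P \<Psi> T) (Y i)) (0, y) (0, h))) (at y)"
      by (rule has_derivative_vec_lambda, rule restrict_y[OF _ z, where k=0]) (intro Ck_all_P Ck\<Psi>)
    have e: "(\<chi> i. fd (P (P \<Psi> T) (Y i)) (0, y) (0, h)) = M *v h" for h
    proof -
      have "fd (P (P \<Psi> T) (Y i)) (0, y) (0, h) = (\<Sum>j\<in>UNIV. h $ j * Nf j i (0, y))" for i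
        by (rule dy_sum[OF _ z, where k=0]) (intro Ck_all_P Ck\<Psi>)
      then show ?thesis by (simp add: vec_eq_iff M_def matrix_vector_mult_def transpose_def Nm_def mult.commute)
    qed
    have dF: "(F0 has_derivative (\<lambda>h. - (M *v h))) (at y)"
      unfolding F0_def[abs_def] using has_derivative_minus[OF d] e by simp
    have "det M \<noteq> 0" using det_Nm[of 0 y] y eps by (simp add: M_def)
    then have "invertible M" by (simp add: invertible_det_nz)
    then obtain A' where A': "M ** A' = mat 1" unfolding invertible_def by blast
    have bl: "bounded_linear (\<lambda>h. - (A' *v h))" by (intro bounded_linear_minus matrix_vector_mul_bounded_linear)
    have "(\<lambda>h. - (M *v h)) \<circ> (\<lambda>h. - (A' *v h)) = id"
    proof
      fix h
      have "M *v (- (A' *v h)) = - (M *v (A' *v h))"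
        using linear_neg[OF bounded_linear.linear[OF matrix_vector_mul_bounded_linear[of M]]] by simp
      then show "((\<lambda>h. - (M *v h)) \<circ> (\<lambda>h. - (A' *v h))) h = id h"
        by (simp add: matrix_vector_mul_assoc A')
    qed
    then show "\<exists>F' g'. (F0 has_derivative F') (at y) \<and> bounded_linear g' \<and> F' \<circ> g' = id"
      using dF bl by blast
  qed simp
qed

lemma kakeya:
  assumes E: "curved_kakeya \<phi> \<epsilon>0 E" and y: "y \<in> YB"
  shows "\<exists>\<omega>\<in>YB. {z\<in>Ub. \<kappa> z \<in> kcurve \<phi> \<epsilon>0 y (\<omega>, 0)} \<subseteq> {z\<in>Ub. \<kappa> z \<in> E}
     \<and> (\<exists>p. {z\<in>Ub. \<kappa> z \<in> kcurve \<phi> \<epsilon>0 y (\<omega>, 0)} = Ub \<inter> {p + s *\<^sub>R (- grad hf y, 1) | s. True})"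
proof -
  obtain \<omega> where w: "\<omega> \<in> YB" and sub: "kcurve \<phi> \<epsilon>0 y (\<omega>, 0) \<subseteq> E"
    using E y unfolding curved_kakeya_def by blast
  have yn: "norm y < \<epsilon>0" and wn: "norm \<omega> < \<epsilon>0" using y w by auto
  define g where "g = grad hf y"
  have key: "z \<in> Ub \<Longrightarrow> (\<kappa> z \<in> kcurve \<phi> \<epsilon>0 y (\<omega>, 0)) \<longleftrightarrow> (\<exists>s. z = (\<omega>, 0) + s *\<^sub>R (- g, 1))" for z
  proof -
    assume z: "z \<in> Ub"
    have "(\<kappa> z \<in> kcurve \<phi> \<epsilon>0 y (\<omega>, 0)) \<longleftrightarrow> fst z + snd z *\<^sub>R g = \<omega>"
      using kappa_in[OF z] grad_kappa[OF z yn] grad_omega[OF wn yn] by (simp add: kcurve_def g_def)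
    also have "\<dots> \<longleftrightarrow> (\<exists>s. z = (\<omega>, 0) + s *\<^sub>R (- g, 1))"
    proof
      assume "fst z + snd z *\<^sub>R g = \<omega>"
      then have "z = (\<omega>, 0) + snd z *\<^sub>R (- g, 1)" by (auto simp: prod_eq_iff algebra_simps)
      then show "\<exists>s. z = (\<omega>, 0) + s *\<^sub>R (- g, 1)" by blast
    next
      assume "\<exists>s. z = (\<omega>, 0) + s *\<^sub>R (- g, 1)"
      then show "fst z + snd z *\<^sub>R g = \<omega>" by auto
    qed
    finally show ?thesis .
  qed
  have "{z\<in>Ub. \<kappa> z \<in> kcurve \<phi> \<epsilon>0 y (\<omega>, 0)} = Ub \<inter> {(\<omega>, 0) + s *\<^sub>R (- grad hf y, 1) | s. True}"
    using key by (auto simp: g_def)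
  moreover have "{z\<in>Ub. \<kappa> z \<in> kcurve \<phi> \<epsilon>0 y (\<omega>, 0)} \<subseteq> {z\<in>Ub. \<kappa> z \<in> E}" using sub by auto
  ultimately show ?thesis using w by blast
qed

lemma main:
  "\<exists>e1 UU kk hh qq f0. 0 < e1 \<and> e1 \<le> \<epsilon>0 \<and> 0 \<in> UU \<and> diffeo_on UU kk
     \<and> kk ` UU \<subseteq> dom_x e1
     \<and> smooth_on (ball 0 e1) hh \<and> smooth_on (ball 0 e1) qq \<and> smooth_on (snd ` UU) f0
     \<and> (\<forall>y\<in>ball 0 e1. det (hess hh y) \<noteq> 0)
     \<and> (\<forall>x t y. (x, t) \<in> UU \<longrightarrow> y \<in> ball 0 e1 \<longrightarrow>
          \<phi> (kk (x, t)) y = x \<bullet> y + t * hh y + qq y + f0 t)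
     \<and> (\<forall>y\<in>ball 0 e1. \<forall>z\<in>UU.
          {z'\<in>UU. grad (\<phi> (kk z')) y = grad (\<phi> (kk z)) y}
          = UU \<inter> {z + s *\<^sub>R (- grad hh y, 1) | s. True})
     \<and> open ((\<lambda>y. - grad hh y) ` ball 0 e1)
     \<and> (\<forall>E. curved_kakeya \<phi> e1 E \<longrightarrow> (\<forall>y\<in>ball 0 e1. \<exists>\<omega>\<in>ball 0 e1.
          {z\<in>UU. kk z \<in> kcurve \<phi> e1 y (\<omega>, 0)} \<subseteq> {z\<in>UU. kk z \<in> E}
          \<and> (\<exists>p. {z\<in>UU. kk z \<in> kcurve \<phi> e1 y (\<omega>, 0)} = UU \<inter> {p + s *\<^sub>R (- grad hh y, 1) | s. True})))"
proof (intro exI conjI)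
  show "0 < \<epsilon>0" by (rule eps)
  show "\<epsilon>0 \<le> \<epsilon>0" by simp
  show "0 \<in> Ub" by (rule zero_Ub)
  show "diffeo_on Ub \<kappa>" by (rule diffeo)
  show "\<kappa> ` Ub \<subseteq> dom_x \<epsilon>0" using kappa_img by simp
  show "smooth_on YB hf" using Ckhf Ck_smooth by blast
  show "smooth_on YB (\<lambda>y. 0::real)" using Ck_const[of YB] Ck_smooth by blast
  show "smooth_on (snd ` Ub) ff" using Ck_ff Ck_smooth snd_Ub by metis
  show "\<forall>y\<in>YB. det (hess hf y) \<noteq> 0" using hess_hf det_Nm eps by simp
  show "\<forall>x t y. (x, t) \<in> Ub \<longrightarrow> y \<in> YB \<longrightarrow> \<phi> (\<kappa> (x, t)) y = x \<bullet> y + t * hf y + 0 + ff t"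
    using ident by fastforce
  show "\<forall>y\<in>YB. \<forall>z\<in>Ub. {z'\<in>Ub. grad (\<phi> (\<kappa> z')) y = grad (\<phi> (\<kappa> z)) y}
          = Ub \<inter> {z + s *\<^sub>R (- grad hf y, 1) | s. True}"
    using line_set by simp
  show "open ((\<lambda>y. - grad hf y) ` YB)" by (rule open_grad)
  show "\<forall>E. curved_kakeya \<phi> \<epsilon>0 E \<longrightarrow> (\<forall>y\<in>YB. \<exists>\<omega>\<in>YB.
          {z\<in>Ub. \<kappa> z \<in> kcurve \<phi> \<epsilon>0 y (\<omega>, 0)} \<subseteq> {z\<in>Ub. \<kappa> z \<in> E}
          \<and> (\<exists>p. {z\<in>Ub. \<kappa> z \<in> kcurve \<phi> \<epsilon>0 y (\<omega>, 0)} = Ub \<inter> {p + s *\<^sub>R (- grad hf y, 1) | s. True}))"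
    using kakeya by blast
qed

end

theorem theorem1p12:
  fixes \<psi> :: "real \<Rightarrow> real^'n \<Rightarrow> real" and \<epsilon>0 :: real
  defines "\<phi> \<equiv> ti_phase \<psi>"
  assumes dim: "CARD('n) \<ge> 2"
    and eps: "\<epsilon>0 > 0"
    and smooth: "smooth_on (ball 0 \<epsilon>0 \<times> ball 0 \<epsilon>0) (\<lambda>(t, y). \<psi> t y)"
    and psi0: "\<forall>y\<in>ball 0 \<epsilon>0. \<psi> 0 y = 0"
    and h1: "H1 \<phi> \<epsilon>0" and h2: "H2 \<phi> \<epsilon>0"
    and bourgain: "\<forall>X\<in>dom_x \<epsilon>0. \<forall>y0\<in>ball 0 \<epsilon>0. bourgain_at \<phi> X y0"
  shows "\<exists>\<epsilon>1 U \<kappa> h q f. 0 < \<epsilon>1 \<and> \<epsilon>1 \<le> \<epsilon>0 \<and> 0 \<in> U \<and> diffeo_on U \<kappa>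
     \<and> \<kappa> ` U \<subseteq> dom_x \<epsilon>1
     \<and> smooth_on (ball 0 \<epsilon>1) h \<and> smooth_on (ball 0 \<epsilon>1) q \<and> smooth_on (snd ` U) f
     \<and> (\<forall>y\<in>ball 0 \<epsilon>1. det (hess h y) \<noteq> 0)
     \<and> (\<forall>x t y. (x, t) \<in> U \<longrightarrow> y \<in> ball 0 \<epsilon>1 \<longrightarrow>
          \<phi> (\<kappa> (x, t)) y = x \<bullet> y + t * h y + q y + f t)
     \<and> (\<forall>y\<in>ball 0 \<epsilon>1. \<forall>z\<in>U.
          {z'\<in>U. grad (\<phi> (\<kappa> z')) y = grad (\<phi> (\<kappa> z)) y}
          = U \<inter> {z + s *\<^sub>R (- grad h y, 1) | s. True})
     \<and> open ((\<lambda>y. - grad h y) ` ball 0 \<epsilon>1)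
     \<and> (\<forall>E. curved_kakeya \<phi> \<epsilon>1 E \<longrightarrow> (\<forall>y\<in>ball 0 \<epsilon>1. \<exists>\<omega>\<in>ball 0 \<epsilon>1.
          {z\<in>U. \<kappa> z \<in> kcurve \<phi> \<epsilon>1 y (\<omega>, 0)} \<subseteq> {z\<in>U. \<kappa> z \<in> E}
          \<and> (\<exists>p. {z\<in>U. \<kappa> z \<in> kcurve \<phi> \<epsilon>1 y (\<omega>, 0)} = U \<inter> {p + s *\<^sub>R (- grad h y, 1) | s. True})))"
proof -
  interpret ph2 \<psi> \<epsilon>0
    by unfold_locales (use eps smooth psi0 h2 bourgain dim in \<open>simp_all add: \<phi>_def\<close>)
  show ?thesis unfolding \<phi>_def by (rule main)
qed

end
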